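(* For every $\varepsilon>0$ there is $n_0$ such that for all $n\ge n_0$, $f(n)\le 2n^{6+\varepsilon}$. (That is, $f(n)\le 2n^{6+o(1)}$ for $n$ sufficiently large.)
   Context: For $n\ge 1$, $A_n$ denotes the finite integral symmetric relation algebra with atoms $1'$, $r$, $b_1,\dots,b_n$, all symmetric, in which a diversity cycle $xyz$ is mandatory (i.e. $x;y\ge z$) if and only if it involves $r$, and forbidden (i.e. $x;y\cdot z=0$) otherwise. A representation over a set $U$ is an embedding into the full relation algebra on $U\times U$. $\operatorname{Spec}(A)$ is the set of cardinals $\alpha\le\omega$ such that $A$ has a representation over a set of cardinality $\alpha$, and $f(n)=\min\operatorname{Spec}(A_n)$. *)

theory Defs
  imports Complex_Main "HOL-Library.Extended_Nat"
begin

datatype atom = One | Red | Blue nat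

definition atoms :: "nat \<Rightarrow> atom set" where
  "atoms n = {One, Red} \<union> Blue ` {1..n}"

text \<open>le_comp x y z  means  z \<le> x;y  in A_n (all atoms symmetric).
  Identity rules, and for diversity atoms: a cycle xyz is mandatory iff it involves r,
  forbidden otherwise.\<close>
definition le_comp :: "atom \<Rightarrow> atom \<Rightarrow> atom \<Rightarrow> bool" where
  "le_comp x y z =
     (if x = One then z = y
      else if y = One then z = x
      else if z = One then x = y
      else (x = Red \<or> y = Red \<or> z = Red))"

text \<open>A representation of A_n over U: an embedding into the full relation algebra on U \<times> U,
  determined by the images of the atoms: nonempty, pairwise disjoint relations covering U \<times> U,
  identity atom sent to the identity on U, converse preserved, composition preserved.\<close>
definition is_rep :: "nat \<Rightarrow> 'u set \<Rightarrow> (atom \<Rightarrow> ('u \<times> 'u) set) \<Rightarrow> bool" where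
  "is_rep n U R \<longleftrightarrow>
     (\<forall>a\<in>atoms n. R a \<noteq> {} \<and> R a \<subseteq> U \<times> U) \<and>
     (\<forall>a\<in>atoms n. \<forall>b\<in>atoms n. a \<noteq> b \<longrightarrow> R a \<inter> R b = {}) \<and>
     (\<Union>a\<in>atoms n. R a) = U \<times> U \<and>
     R One = Id_on U \<and>
     (\<forall>a\<in>atoms n. (R a)\<inverse> = R a) \<and>
     (\<forall>x\<in>atoms n. \<forall>y\<in>atoms n.
        R x O R y = (\<Union>z\<in>{z\<in>atoms n. le_comp x y z}. R z))"

text \<open>Spec(A_n): cardinals \<le> \<omega> of sets carrying a representation (sets of size \<le> \<omega> are
  taken, w.l.o.g., as subsets of nat; \<omega> is rendered as \<infinity>).\<close>
definition Spec :: "nat \<Rightarrow> enat set" where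
  "Spec n = {\<alpha>. \<exists>(U::nat set) R. is_rep n U R \<and>
                  (if finite U then \<alpha> = enat (card U) else \<alpha> = \<infinity>)}"

definition f :: "nat \<Rightarrow> enat" where
  "f n = Inf (Spec n)"

end

theory Submission
  imports Defs "HOL-Library.FuncSet" "HOL-Library.Nat_Bijection" "HOL-Real_Asymp.Real_Asymp"
begin

lemma pair_count:
  fixes E :: "'e set" and K :: "'k set" and W :: "'w set"
  assumes finE: "finite E" and finK: "finite K" and finW: "finite W"
    and e: "\<forall>w\<in>W. e1 w \<in> E \<and> e2 w \<in> E"
    and dist: "\<forall>w\<in>W. \<forall>w'\<in>W. e1 w \<noteq> e2 w'"
    and inj1: "inj_on e1 W" and inj2: "inj_on e2 W"
    and ij: "i \<in> K" "j \<in> K"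
  shows "card {f \<in> PiE E (\<lambda>_. K). \<forall>w\<in>W. \<not>(f (e1 w) = i \<and> f (e2 w) = j)} * card K ^ (2 * card W)
         = (card K ^ 2 - 1) ^ card W * card K ^ card E"
  using finW e dist inj1 inj2
proof (induction W rule: finite_induct)
  case empty
  then show ?case using finE by (simp add: card_PiE)
next
  case (insert w W)
  define a where "a = e1 w"
  define b where "b = e2 w"
  define n where "n = card K"
  define S where "S = {f \<in> PiE E (\<lambda>_. K). \<forall>w\<in>W. \<not>(f (e1 w) = i \<and> f (e2 w) = j)}"
  define T where "T = (\<lambda>y1 y2. {f \<in> S. f a = y1 \<and> f b = y2})"
  have aE: "a \<in> E" and bE: "b \<in> E" using insert.prems a_def b_def by auto
  have ab: "a \<noteq> b" using insert.prems(2) a_def b_def by auto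
  have aW: "\<forall>w'\<in>W. a \<noteq> e1 w' \<and> a \<noteq> e2 w'"
    using insert.prems(2,3) insert.hyps(2) a_def by (auto simp: inj_on_def) 
  have bW: "\<forall>w'\<in>W. b \<noteq> e1 w' \<and> b \<noteq> e2 w'"
    using insert.prems(2,4) insert.hyps(2) b_def by (auto simp: inj_on_def)
  have IH: "card S * n ^ (2 * card W) = (n ^ 2 - 1) ^ card W * n ^ card E"
    using insert.IH insert.prems S_def n_def by (auto simp: inj_on_def)
  have finS: "finite S" unfolding S_def using finE finK by (intro finite_subset[OF _ finite_PiE[of E "\<lambda>_. K"]]) auto
  have Teq: "card (T y1 y2) = card (T i j)" if y: "y1 \<in> K" "y2 \<in> K" for y1 y2
  proof -
    have "bij_betw (\<lambda>f. f(a := y1, b := y2)) (T i j) (T y1 y2)"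
    proof (rule bij_betw_byWitness[where f' = "\<lambda>f. f(a := i, b := j)"])
      show "\<forall>f\<in>T i j. f(a := y1, b := y2, a := i, b := j) = f"
        unfolding T_def using ab by (auto intro!: ext)
      show "\<forall>f\<in>T y1 y2. f(a := i, b := j, a := y1, b := y2) = f"
        unfolding T_def using ab by (auto intro!: ext)
      have upd: "f(a := z1, b := z2) \<in> T z1 z2" if "f \<in> S" "z1 \<in> K" "z2 \<in> K" for f z1 z2
      proof -
        have fS: "f \<in> PiE E (\<lambda>_. K)" "\<forall>w\<in>W. \<not>(f (e1 w) = i \<and> f (e2 w) = j)"
          using that(1) S_def by auto
        have "f(a := z1, b := z2) \<in> PiE E (\<lambda>_. K)"
          using fS(1) aE bE that(2,3) by (auto simp: PiE_iff extensional_def)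
        moreover have "\<forall>w\<in>W. \<not>((f(a := z1, b := z2)) (e1 w) = i \<and> (f(a := z1, b := z2)) (e2 w) = j)"
          using fS(2) aW bW by auto
        moreover have "(f(a := z1, b := z2)) a = z1" "(f(a := z1, b := z2)) b = z2" using ab by auto
        ultimately show ?thesis unfolding T_def S_def by blast
      qed
      show "(\<lambda>f. f(a := y1, b := y2)) ` T i j \<subseteq> T y1 y2"
        using upd y unfolding T_def by auto
      show "(\<lambda>f. f(a := i, b := j)) ` T y1 y2 \<subseteq> T i j"
        using upd ij unfolding T_def by auto
    qed
    then show ?thesis by (simp add: bij_betw_same_card)
  qed
  have Sunion: "S = (\<Union>y\<in>K \<times> K. T (fst y) (snd y))"
    unfolding T_def S_def using aE bE by (auto simp: PiE_iff)
  have "card S = (\<Sum>y\<in>K \<times> K. card (T (fst y) (snd y)))"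
    unfolding Sunion
    by (rule card_UN_disjoint) (use finK finS in \<open>auto simp: T_def\<close>)
  also have "\<dots> = (\<Sum>y\<in>K \<times> K. card (T i j))"
    by (rule sum.cong) (auto intro: Teq)
  also have "\<dots> = n ^ 2 * card (T i j)" by (simp add: n_def card_cartesian_product power2_eq_square)
  finally have cS: "card S = n ^ 2 * card (T i j)" .
  have new: "{f \<in> PiE E (\<lambda>_. K). \<forall>w\<in>insert w W. \<not>(f (e1 w) = i \<and> f (e2 w) = j)} = S - T i j"
    unfolding S_def T_def a_def b_def by auto
  have cnew: "card (S - T i j) = card S - card (T i j)"
    by (rule card_Diff_subset) (use finS in \<open>auto simp: T_def\<close>)
  have "card (S - T i j) * n ^ 2 = card S * (n^2 - 1)"
    using cnew cS by (simp add: algebra_simps diff_mult_distrib)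
  then have "card (S - T i j) * n ^ (2 * card (insert w W)) = card S * n ^ (2 * card W) * (n^2 - 1)"
  proof -
    assume h: "card (S - T i j) * n ^ 2 = card S * (n^2 - 1)"
    have "card (S - T i j) * n ^ (2 * card (insert w W)) = (card (S - T i j) * n ^ 2) * n ^ (2 * card W)"
      using insert.hyps by (simp add: power_add mult.assoc power2_eq_square)
    also have "\<dots> = card S * n ^ (2 * card W) * (n^2 - 1)" unfolding h by (simp add: algebra_simps)
    finally show ?thesis .
  qed
  also have "\<dots> = (n ^ 2 - 1) ^ card (insert w W) * n ^ card E"
    using IH insert.hyps by simp
  finally show ?case unfolding new n_def .
qed

lemma single_count:
  fixes E :: "'e set" and K :: "'k set" and W :: "'w set"
  assumes finE: "finite E" and finK: "finite K" and finW: "finite W"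
    and e: "\<forall>w\<in>W. e1 w \<in> E"
    and inj1: "inj_on e1 W"
    and ij: "j \<in> K"
  shows "card {f \<in> PiE E (\<lambda>_. K). \<forall>w\<in>W. f (e1 w) \<noteq> j} * card K ^ card W
         = (card K - 1) ^ card W * card K ^ card E"
  using finW e inj1
proof (induction W rule: finite_induct)
  case empty
  then show ?case using finE by (simp add: card_PiE)
next
  case (insert w W)
  define a where "a = e1 w"
  define n where "n = card K"
  define S where "S = {f \<in> PiE E (\<lambda>_. K). \<forall>w\<in>W. f (e1 w) \<noteq> j}"
  define T where "T = (\<lambda>y1. {f \<in> S. f a = y1})"
  have aE: "a \<in> E" using insert.prems a_def by auto
  have aW: "\<forall>w'\<in>W. a \<noteq> e1 w'"
    using insert.prems(2) insert.hyps(2) a_def by (auto simp: inj_on_def) 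
  have IH: "card S * n ^ (card W) = (n - 1) ^ card W * n ^ card E"
    using insert.IH insert.prems S_def n_def by (auto simp: inj_on_def)
  have finS: "finite S" unfolding S_def using finE finK by (intro finite_subset[OF _ finite_PiE[of E "\<lambda>_. K"]]) auto
  have Teq: "card (T y1) = card (T j)" if y: "y1 \<in> K" for y1
  proof -
    have "bij_betw (\<lambda>f. f(a := y1)) (T j) (T y1)"
    proof (rule bij_betw_byWitness[where f' = "\<lambda>f. f(a := j)"])
      show "\<forall>f\<in>T j. f(a := y1, a := j) = f"
        unfolding T_def by (auto intro!: ext)
      show "\<forall>f\<in>T y1. f(a := j, a := y1) = f"
        unfolding T_def by (auto intro!: ext)
      have upd: "f(a := z1) \<in> T z1" if "f \<in> S" "z1 \<in> K" for f z1
      proof -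
        have fS: "f \<in> PiE E (\<lambda>_. K)" "\<forall>w\<in>W. f (e1 w) \<noteq> j"
          using that(1) S_def by auto
        have "f(a := z1) \<in> PiE E (\<lambda>_. K)"
          using fS(1) aE that(2) by (auto simp: PiE_iff extensional_def)
        moreover have "\<forall>w\<in>W. (f(a := z1)) (e1 w) \<noteq> j"
          using fS(2) aW by auto
        moreover have "(f(a := z1)) a = z1" by auto
        ultimately show ?thesis unfolding T_def S_def by blast
      qed
      show "(\<lambda>f. f(a := y1)) ` T j \<subseteq> T y1"
        using upd y unfolding T_def by auto
      show "(\<lambda>f. f(a := j)) ` T y1 \<subseteq> T j"
        using upd ij unfolding T_def by auto
    qed
    then show ?thesis by (simp add: bij_betw_same_card)
  qed
  have Sunion: "S = (\<Union>y\<in>K. T y)"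
    unfolding T_def S_def using aE by (auto simp: PiE_iff)
  have "card S = (\<Sum>y\<in>K. card (T y))"
    unfolding Sunion
    by (rule card_UN_disjoint) (use finK finS in \<open>auto simp: T_def\<close>)
  also have "\<dots> = (\<Sum>y\<in>K. card (T j))"
    by (rule sum.cong) (auto intro: Teq)
  also have "\<dots> = n * card (T j)" by (simp add: n_def)
  finally have cS: "card S = n * card (T j)" .
  have new: "{f \<in> PiE E (\<lambda>_. K). \<forall>w\<in>insert w W. f (e1 w) \<noteq> j} = S - T j"
    unfolding S_def T_def a_def by auto
  have cnew: "card (S - T j) = card S - card (T j)"
    by (rule card_Diff_subset) (use finS in \<open>auto simp: T_def\<close>)
  have h: "card (S - T j) * n = card S * (n - 1)"
    using cnew cS by (simp add: algebra_simps diff_mult_distrib)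
  have "card (S - T j) * n ^ (card (insert w W)) = (card (S - T j) * n) * n ^ (card W)"
    using insert.hyps by (simp add: mult.assoc mult.commute)
  also have "\<dots> = card S * n ^ (card W) * (n - 1)" unfolding h by (simp add: algebra_simps)
  also have "\<dots> = (n - 1) ^ card (insert w W) * n ^ card E"
    using IH insert.hyps by simp
  finally show ?case unfolding new n_def .
qed

lemma binom_prod_ge: "((s+u) choose s) * ((s+v) choose s) \<ge> (s+u+v) choose s"
proof (induction v)
  case 0
  then show ?case by simp
next
  case (Suc v)
  define C where "C = (s+u) choose s"
  define P where "P = (s+v) choose s"
  define P' where "P' = (s+Suc v) choose s"
  define Q where "Q = (s+u+v) choose s"
  define Q' where "Q' = (s+u+Suc v) choose s"
  have hP: "(v+1) * P' = (s+v+1) * P"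
    using binomial_absorb_comp[of "s+v+1" s] unfolding P_def P'_def by simp
  have hQ: "(u+v+1) * Q' = (s+u+v+1) * Q"
    using binomial_absorb_comp[of "s+u+v+1" s] unfolding Q_def Q'_def by simp
  have IH: "C * P \<ge> Q" using Suc.IH unfolding C_def P_def Q_def .
  have "Q' * ((v+1) * (u+v+1)) = Q * ((s+u+v+1) * (v+1))"
    using hQ by (metis (no_types, lifting) mult.assoc mult.commute)
  also have "\<dots> \<le> Q * (s+v+1) * (u+v+1)"
  proof -
    have "(s+u+v+1) * (v+1) \<le> (s+v+1) * (u+v+1)" by (simp add: algebra_simps)
    then show ?thesis by (metis mult.assoc mult_le_mono2)
  qed
  also have "\<dots> \<le> C * P * (s+v+1) * (u+v+1)"
    using IH by (intro mult_right_mono) auto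
  also have "\<dots> = (C * P') * ((v+1) * (u+v+1))"
    using hP by (metis (no_types, lifting) mult.assoc mult.commute)
  finally have "Q' * ((v+1) * (u+v+1)) \<le> (C * P') * ((v+1) * (u+v+1))" .
  then have "Q' \<le> C * P'" using mult_le_cancel2[of Q' "(v+1)*(u+v+1)" "C*P'"] by simp
  then show ?case unfolding C_def P'_def Q'_def by simp
qed

definition GS :: "nat \<Rightarrow> nat set" where "GS s = {..<6*s-1}"
definition VS :: "nat \<Rightarrow> nat set set" where "VS s = {A. A \<subseteq> GS s \<and> card A = 3*s}"

lemma VS_finite: "A \<in> VS s \<Longrightarrow> finite A"
  unfolding VS_def GS_def by (auto intro: finite_subset)

lemma finite_VS: "finite (VS s)"
proof -
  have "VS s \<subseteq> Pow (GS s)" unfolding VS_def by auto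
  then show ?thesis unfolding GS_def by (rule finite_subset) auto
qed

lemma card_VS: "card (VS s) = (6*s-1) choose (3*s)"
  unfolding VS_def GS_def using n_subsets[of "{..<6*s-1}" "3*s"] by simp

lemma basic_cards:
  assumes A: "A \<in> VS s" and C: "C \<in> VS s" and s: "s \<ge> 1"
  shows "card (A - C) = 3*s - card (A \<inter> C)" "card (C - A) = 3*s - card (A \<inter> C)"
    "card (GS s - (A \<union> C)) = card (A \<inter> C) - 1" "card (A \<inter> C) \<ge> 1" "card (A \<inter> C) \<le> 3*s"
proof -
  have fA: "finite A" and fC: "finite C" using A C VS_finite by auto
  have cA: "card A = 3*s" and cC: "card C = 3*s" using A C unfolding VS_def by auto
  have sub: "A \<union> C \<subseteq> GS s" using A C unfolding VS_def by auto
  have u: "card (A \<union> C) + card (A \<inter> C) = 6*s" using card_Un_Int[OF fA fC] cA cC by simp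
  have "card (A \<union> C) \<le> 6*s-1" using card_mono[OF _ sub] unfolding GS_def by simp
  then show "card (A \<inter> C) \<ge> 1" using u s by linarith
  show "card (A - C) = 3*s - card (A \<inter> C)"
    using card_Diff_subset_Int[of A C] fA cA by (simp add: Int_commute)
  show "card (C - A) = 3*s - card (A \<inter> C)"
    using card_Diff_subset_Int[of C A] fC cC by (simp add: Int_commute)
  show "card (GS s - (A \<union> C)) = card (A \<inter> C) - 1"
    using card_Diff_subset[OF finite_subset[OF sub] sub] u unfolding GS_def by simp
  show "card (A \<inter> C) \<le> 3*s" using card_mono[OF fA, of "A \<inter> C"] cA by simp
qed

lemma triangle_free:
  assumes A: "A \<in> VS s" and B: "B \<in> VS s" and C: "C \<in> VS s"
    and s: "s \<ge> 1" and ab: "card (A \<inter> B) \<le> s" and ac: "card (A \<inter> C) \<le> s" and bc: "card (B \<inter> C) \<le> s"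
  shows False
proof -
  have fA: "finite A" and fB: "finite B" and fC: "finite C" using A B C VS_finite by auto
  have cA: "card A = 3*s" and cB: "card B = 3*s" and cC: "card C = 3*s" using A B C unfolding VS_def by auto
  have sub: "A \<union> B \<union> C \<subseteq> GS s" using A B C unfolding VS_def by auto
  have u1: "card (A \<union> B) + card (A \<inter> B) = 6*s" using card_Un_Int[OF fA fB] cA cB by simp
  have u2: "card (A \<union> B \<union> C) + card ((A \<union> B) \<inter> C) = card (A \<union> B) + 3*s"
    using card_Un_Int[of "A \<union> B" C] fA fB fC cC by simp
  have "(A \<union> B) \<inter> C = (A \<inter> C) \<union> (B \<inter> C)" by auto
  then have "card ((A \<union> B) \<inter> C) \<le> card (A \<inter> C) + card (B \<inter> C)" by (metis card_Un_le)
  moreover have "card (A \<union> B \<union> C) \<le> 6*s-1" using card_mono[OF _ sub] unfolding GS_def by simp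
  ultimately show False using u1 u2 ab ac bc s by linarith
qed

lemma fam1:
  assumes fY: "finite Y" and d: "F0 \<inter> Y = {}"
  shows "card ((\<lambda>Q. F0 \<union> Q) ` {Q. Q \<subseteq> Y \<and> card Q = b}) = card Y choose b"
proof -
  have "inj_on (\<lambda>Q. F0 \<union> Q) {Q. Q \<subseteq> Y \<and> card Q = b}"
  proof (rule inj_onI)
    fix Q1 Q2 assume "Q1 \<in> {Q. Q \<subseteq> Y \<and> card Q = b}" "Q2 \<in> {Q. Q \<subseteq> Y \<and> card Q = b}" "F0 \<union> Q1 = F0 \<union> Q2"
    then have "(F0 \<union> Q1) \<inter> Y = (F0 \<union> Q2) \<inter> Y" by simp
    then show "Q1 = Q2" using d \<open>Q1 \<in> _\<close> \<open>Q2 \<in> _\<close> by auto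
  qed
  then show ?thesis by (simp add: card_image n_subsets fY)
qed

lemma fam2:
  assumes fX: "finite X" and fY: "finite Y" and dXY: "X \<inter> Y = {}" and d: "F0 \<inter> (X \<union> Y) = {}"
  shows "card ((\<lambda>(S,Q). F0 \<union> S \<union> Q) ` ({S. S \<subseteq> X \<and> card S = a} \<times> {Q. Q \<subseteq> Y \<and> card Q = b}))
     = (card X choose a) * (card Y choose b)"
proof -
  have "inj_on (\<lambda>(S,Q). F0 \<union> S \<union> Q) ({S. S \<subseteq> X \<and> card S = a} \<times> {Q. Q \<subseteq> Y \<and> card Q = b})"
  proof (rule inj_onI, clarify)
    fix S1 Q1 S2 Q2
    assume h: "S1 \<subseteq> X" "Q1 \<subseteq> Y" "S2 \<subseteq> X" "Q2 \<subseteq> Y" "F0 \<union> S1 \<union> Q1 = F0 \<union> S2 \<union> Q2"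
    have e1: "(F0 \<union> S1 \<union> Q1) \<inter> X = S1" "(F0 \<union> S2 \<union> Q2) \<inter> X = S2"
      using h(1-4) d dXY by auto
    have e2: "(F0 \<union> S1 \<union> Q1) \<inter> Y = Q1" "(F0 \<union> S2 \<union> Q2) \<inter> Y = Q2"
      using h(1-4) d dXY by auto
    show "S1 = S2 \<and> Q1 = Q2" using e1 e2 h(5) by metis
  qed
  then show ?thesis by (simp add: card_image n_subsets fX fY card_cartesian_product)
qed

lemma card_Un3:
  assumes "finite a" "finite b" "finite c" "a \<inter> b = {}" "a \<inter> c = {}" "b \<inter> c = {}"
  shows "card (a \<union> b \<union> c) = card a + card b + card c"
  using assms by (simp add: card_Un_disjoint Int_Un_distrib2)


lemma W1_bound:
  assumes A: "A \<in> VS s" and C: "C \<in> VS s" and s: "s \<ge> 1" and t: "card (A \<inter> C) > s"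
  shows "card {B \<in> VS s. card (A \<inter> B) \<le> s \<and> card (B \<inter> C) \<le> s} \<ge> (2*s-1) choose s"
proof -
  define W where "W = {B \<in> VS s. card (A \<inter> B) \<le> s \<and> card (B \<inter> C) \<le> s}"
  have finW: "finite W" unfolding W_def using finite_VS by auto
  define t where "t = card (A \<inter> C)"
  define d where "d = 3*s - t"
  define X where "X = A - C"
  define Y where "Y = C - A"
  define Z where "Z = A \<inter> C"
  define Ou where "Ou = GS s - (A \<union> C)"
  have fA: "finite A" and fC: "finite C" using A C VS_finite by auto
  have fX: "finite X" "finite Y" "finite Z" "finite Ou" unfolding X_def Y_def Z_def Ou_def GS_def
    using fA fC by auto
  have cX: "card X = d" "card Y = d" "card Ou = t - 1" "card Z = t"
    using basic_cards[OF A C s] unfolding X_def Y_def Ou_def d_def t_def Z_def by auto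
  have tle: "t \<le> 3*s" using basic_cards[OF A C s] t_def by auto
  have sub: "A \<subseteq> GS s" "C \<subseteq> GS s" using A C unfolding VS_def by auto
  show ?thesis
  proof (cases "d \<ge> s")
    case True
    obtain S2 where S2: "S2 \<subseteq> Y" "card S2 = s" using obtain_subset_with_card_n[of s Y] True cX by auto
    define F where "F = (\<lambda>(S,Q). S2 \<union> S \<union> Q) ` ({S. S \<subseteq> X \<and> card S = s} \<times> {Q. Q \<subseteq> Ou \<and> card Q = s})"
    have cF: "card F = (d choose s) * ((t-1) choose s)"
      unfolding F_def using fam2[of X Ou S2 s s] fX cX S2 unfolding X_def Y_def Ou_def by auto
    have FW: "F \<subseteq> W"
    proof
      fix B assume "B \<in> F"
      then obtain S Q where SQ: "S \<subseteq> X" "card S = s" "Q \<subseteq> Ou" "card Q = s" "B = S2 \<union> S \<union> Q"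
        unfolding F_def by auto
      have fin: "finite S2" "finite S" "finite Q" using SQ S2 fX by (auto intro: finite_subset)
      have "card B = s + s + s"
        using card_Un3[OF fin] SQ S2 unfolding X_def Y_def Ou_def by auto
      moreover have "B \<subseteq> GS s" using SQ S2 sub unfolding X_def Y_def Ou_def by auto
      moreover have "A \<inter> B = S" using SQ S2 unfolding X_def Y_def Ou_def by auto
      moreover have "B \<inter> C = S2" using SQ S2 unfolding X_def Y_def Ou_def by auto
      ultimately show "B \<in> W" unfolding W_def VS_def using SQ S2 by auto
    qed
    have "(2*s-1) choose s \<le> (d choose s) * ((t-1) choose s)"
      using binom_prod_ge[of s "d-s" "t-1-s"] True t tle unfolding t_def d_def
      by (simp add: add.commute)
    also have "\<dots> = card F" using cF by simp
    also have "\<dots> \<le> card W" using card_mono[OF finW FW] .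
    finally show ?thesis unfolding W_def .
  next
    case False
    have "s - d \<le> card Z" using cX d_def by linarith
    then obtain P where P: "P \<subseteq> Z" "card P = s - d" using obtain_subset_with_card_n[of "s-d" Z] by metis
    define F where "F = (\<lambda>Q. (X \<union> Y \<union> P) \<union> Q) ` {Q. Q \<subseteq> Ou \<and> card Q = 2*s - d}"
    have cF: "card F = (t - 1) choose (2*s-d)"
      unfolding F_def using fam1[of Ou "X \<union> Y \<union> P" "2*s-d"] fX cX P unfolding X_def Y_def Ou_def Z_def by auto
    have FW: "F \<subseteq> W"
    proof
      fix B assume "B \<in> F"
      then obtain Q where SQ: "Q \<subseteq> Ou" "card Q = 2*s-d" "B = (X \<union> Y \<union> P) \<union> Q"
        unfolding F_def by auto
      have fin: "finite X" "finite Y" "finite P" "finite Q" using SQ P fX by (auto intro: finite_subset)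
      have "card (X \<union> Y \<union> P) = d + d + (s-d)"
        using card_Un3[OF fin(1,2,3)] P cX unfolding X_def Y_def Z_def by auto
      then have "card B = d + d + (s-d) + (2*s-d)"
        using SQ fin card_Un_disjoint[of "X \<union> Y \<union> P" Q] P unfolding X_def Y_def Ou_def Z_def by auto
      moreover have "B \<subseteq> GS s" using SQ P sub unfolding X_def Y_def Ou_def Z_def by auto
      moreover have "A \<inter> B = X \<union> P" using SQ P unfolding X_def Y_def Ou_def Z_def by auto
      moreover have "B \<inter> C = Y \<union> P" using SQ P unfolding X_def Y_def Ou_def Z_def by auto
      moreover have "card (X \<union> P) = d + (s - d)" "card (Y \<union> P) = d + (s - d)"
        using card_Un_disjoint[of X P] card_Un_disjoint[of Y P] fin P cX unfolding X_def Y_def Z_def by auto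
      ultimately show "B \<in> W" unfolding W_def VS_def using False by auto
    qed
    have "(2*s-1) choose s = (2*s-1) choose (s-1)"
      using binomial_symmetric[of "s-1" "2*s-1"] s by (simp add: numeral_2_eq_2)
    also have "\<dots> \<le> (t-1) choose (s-1)"
      by (rule binomial_right_mono) (use False d_def tle in linarith)
    also have "\<dots> = (t-1) choose (2*s-d)"
      using binomial_symmetric[of "2*s-d" "t-1"] False d_def tle s by (simp add: algebra_simps)
    also have "\<dots> = card F" using cF by simp
    also have "\<dots> \<le> card W" using card_mono[OF finW FW] .
    finally show ?thesis unfolding W_def .
  qed
qed

lemma diff_nonempty_VS:
  assumes A: "A \<in> VS s" and C: "C \<in> VS s" and ne: "A \<noteq> C"
  shows "A - C \<noteq> {}"
proof
  assume h: "A - C = {}"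
  have sub: "A \<subseteq> C" using h by blast
  have fC: "finite C" using C by (rule VS_finite)
  have cc: "card A = card C" using A C unfolding VS_def by simp
  have "A = C" using card_subset_eq[OF fC sub cc] .
  then show False using ne by simp
qed
lemma W2_bound:
  assumes A: "A \<in> VS s" and C: "C \<in> VS s" and s: "s \<ge> 1" and ne: "A \<noteq> C"
  shows "card {B \<in> VS s. B \<noteq> A \<and> card (A \<inter> B) > s \<and> card (B \<inter> C) \<le> s} \<ge> (2*s-1) choose s"
proof -
  define W where "W = {B \<in> VS s. B \<noteq> A \<and> card (A \<inter> B) > s \<and> card (B \<inter> C) \<le> s}"
  have finW: "finite W" unfolding W_def using finite_VS by auto
  define t where "t = card (A \<inter> C)"
  define d where "d = 3*s - t"
  define X where "X = A - C"
  define Y where "Y = C - A"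
  define Z where "Z = A \<inter> C"
  define Ou where "Ou = GS s - (A \<union> C)"
  have fA: "finite A" and fC: "finite C" using A C VS_finite by auto
  have fX: "finite X" "finite Y" "finite Z" "finite Ou" unfolding X_def Y_def Z_def Ou_def GS_def
    using fA fC by auto
  have cX: "card X = d" "card Y = d" "card Ou = t - 1" "card Z = t"
    using basic_cards[OF A C s] unfolding X_def Y_def Ou_def d_def t_def Z_def by auto
  have tle: "t \<le> 3*s" "t \<ge> 1" using basic_cards[OF A C s] t_def by auto
  have sub: "A \<subseteq> GS s" "C \<subseteq> GS s" using A C unfolding VS_def by auto
  show ?thesis
  proof (cases "t \<le> s")
    case True
    have cXO: "card (X \<union> Ou) = d + (t - 1)"
      using card_Un_disjoint[of X Ou] fX cX unfolding X_def Ou_def by auto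
    have hV: "2*s \<le> card (X \<union> Ou)" using cXO True d_def tle s by linarith
    obtain Vv where Vv: "Vv \<subseteq> X \<union> Ou" "card Vv = 2*s"
      using obtain_subset_with_card_n[OF hV] by blast
    define F where "F = (\<lambda>Q. Vv \<union> Q) ` {Q. Q \<subseteq> Y \<and> card Q = s}"
    have cF: "card F = d choose s"
      unfolding F_def using fam1[of Y Vv s] fX cX Vv unfolding X_def Y_def Ou_def by auto
    have finVv: "finite Vv" using Vv fX by (auto intro: finite_subset)
    have cVX: "card (Vv \<inter> X) \<ge> s + 1"
    proof -
      have "Vv = (Vv \<inter> X) \<union> (Vv \<inter> Ou)" using Vv by auto
      then have "card Vv = card (Vv \<inter> X) + card (Vv \<inter> Ou)"
        using card_Un_disjoint[of "Vv \<inter> X" "Vv \<inter> Ou"] finVv unfolding X_def Ou_def by auto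
      moreover have "card (Vv \<inter> Ou) \<le> t - 1" using card_mono[OF fX(4), of "Vv \<inter> Ou"] cX by auto
      ultimately show ?thesis using Vv True tle by linarith
    qed
    have FW: "F \<subseteq> W"
    proof
      fix B assume "B \<in> F"
      then obtain Q where SQ: "Q \<subseteq> Y" "card Q = s" "B = Vv \<union> Q"
        unfolding F_def by auto
      have finQ: "finite Q" using SQ fX by (auto intro: finite_subset)
      have dj: "Vv \<inter> Q = {}" using SQ Vv unfolding X_def Y_def Ou_def by auto
      have "card B = 2*s + s" using card_Un_disjoint[OF finVv finQ dj] SQ Vv by simp
      moreover have "B \<subseteq> GS s" using SQ Vv sub unfolding X_def Y_def Ou_def by auto
      moreover have "A \<inter> B = Vv \<inter> X" using SQ Vv unfolding X_def Y_def Ou_def by auto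
      moreover have "B \<inter> C = Q" using SQ Vv unfolding X_def Y_def Ou_def by auto
      moreover have "B \<noteq> A"
      proof
        assume "B = A"
        have "Q \<noteq> {}" using SQ s by auto
        then obtain q where "q \<in> Q" by auto
        then have "q \<in> B" "q \<notin> A" using SQ unfolding Y_def by auto
        then show False using \<open>B = A\<close> by simp
      qed
      ultimately show "B \<in> W" unfolding W_def VS_def using SQ cVX by auto
    qed
    have "(2*s-1) choose s \<le> d choose s"
      by (rule binomial_right_mono) (use True d_def in linarith)
    also have "\<dots> = card F" using cF by simp
    also have "\<dots> \<le> card W" using card_mono[OF finW FW] .
    finally show ?thesis unfolding W_def .
  next
    case False
    have "X \<noteq> {}" using diff_nonempty_VS[OF A C ne] unfolding X_def .
    then obtain x where x: "x \<in> X" by auto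
    have hP: "s \<le> card Z" using cX False by linarith
    obtain P where P: "P \<subseteq> Z" "card P = s" using obtain_subset_with_card_n[OF hP] by blast
    define R where "R = (X \<union> Ou) - {x}"
    have cXO: "card (X \<union> Ou) = d + (t - 1)"
      using card_Un_disjoint[of X Ou] fX cX unfolding X_def Ou_def by auto
    have cR: "card R = 3*s - 2" using cXO x fX unfolding R_def d_def using tle by auto
    have finR: "finite R" unfolding R_def using fX by auto
    define F where "F = (\<lambda>Q. (P \<union> {x}) \<union> Q) ` {Q. Q \<subseteq> R \<and> card Q = 2*s-1}"
    have cF: "card F = (3*s-2) choose (2*s-1)"
      unfolding F_def using fam1[of R "P \<union> {x}" "2*s-1"] finR cR P x unfolding R_def X_def Z_def Ou_def by auto
    have finP: "finite P" using P fX by (auto intro: finite_subset)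
    have FW: "F \<subseteq> W"
    proof
      fix B assume "B \<in> F"
      then obtain Q where SQ: "Q \<subseteq> R" "card Q = 2*s-1" "B = (P \<union> {x}) \<union> Q"
        unfolding F_def by auto
      have finQ: "finite Q" using SQ finR by (auto intro: finite_subset)
      have xP: "x \<notin> P" using P x unfolding X_def Z_def by auto
      have c1: "card (P \<union> {x}) = s + 1" using P xP finP by simp
      have dj: "(P \<union> {x}) \<inter> Q = {}" using SQ P x unfolding R_def X_def Z_def Ou_def by auto
      have "card B = (s + 1) + (2*s-1)" using card_Un_disjoint[of "P \<union> {x}" Q] finP finQ dj c1 SQ by simp
      moreover have "B \<subseteq> GS s" using SQ P x sub unfolding R_def X_def Z_def Ou_def by auto
      moreover have "P \<union> {x} \<subseteq> A \<inter> B" using SQ P x unfolding X_def Z_def by auto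
      then have "card (A \<inter> B) \<ge> s + 1" using card_mono[of "A \<inter> B" "P \<union> {x}"] fA c1 by auto
      moreover have "B \<inter> C = P" using SQ P x unfolding R_def X_def Z_def Ou_def by auto
      moreover have "B \<noteq> A"
      proof
        assume "B = A"
        then have "A \<inter> C = P" using \<open>B \<inter> C = P\<close> by simp
        then show False using P False t_def by simp
      qed
      ultimately show "B \<in> W" unfolding W_def VS_def using SQ P s by auto
    qed
    have "(2*s-1) choose s = (2*s-1) choose (s-1)"
      using binomial_symmetric[of "s-1" "2*s-1"] s by (simp add: numeral_2_eq_2)
    also have "\<dots> \<le> (3*s-2) choose (s-1)"
      by (rule binomial_right_mono) (use s in linarith)
    also have "\<dots> = (3*s-2) choose (2*s-1)"
      using binomial_symmetric[of "2*s-1" "3*s-2"] s by (simp add: algebra_simps)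
    also have "\<dots> = card F" using cF by simp
    also have "\<dots> \<le> card W" using card_mono[OF finW FW] .
    finally show ?thesis unfolding W_def .
  qed
qed

lemma det_red:
  assumes A: "A \<in> VS s" and C: "C \<in> VS s" and s: "s \<ge> 2"
  shows "\<exists>B\<in>VS s. B \<noteq> A \<and> card (A \<inter> B) > s \<and> B \<noteq> C \<and> card (B \<inter> C) > s"
proof -
  have s1: "s \<ge> 1" using s by simp
  define t where "t = card (A \<inter> C)"
  define X where "X = A - C"
  define Y where "Y = C - A"
  define Z where "Z = A \<inter> C"
  have fA: "finite A" and fC: "finite C" using A C VS_finite by auto
  have fX: "finite X" "finite Y" "finite Z" unfolding X_def Y_def Z_def using fA fC by auto
  have cX: "card X = 3*s - t" "card Y = 3*s - t" "card Z = t"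
    using basic_cards[OF A C s1] unfolding X_def Y_def t_def Z_def by auto
  have tle: "t \<le> 3*s" "t \<ge> 1" using basic_cards[OF A C s1] t_def by auto
  have sub: "A \<subseteq> GS s" "C \<subseteq> GS s" using A C unfolding VS_def by auto
  have fG: "finite (GS s)" unfolding GS_def by simp
  have cG: "card (GS s) = 6*s-1" unfolding GS_def by simp
  show ?thesis
  proof (cases "t \<ge> s+1")
    case True
    have hZ: "s+1 \<le> card Z" using True cX by simp
    obtain Z' where Z': "Z' \<subseteq> Z" "card Z' = s+1" using obtain_subset_with_card_n[OF hZ] by blast
    have fZ': "finite Z'" using Z' fX by (auto intro: finite_subset)
    have Z'G: "Z' \<subseteq> GS s" using Z' sub unfolding Z_def by auto
    define R where "R = GS s - Z'"
    have cR: "card R = 5*s - 2" unfolding R_def using card_Diff_subset[OF fZ' Z'G] Z' cG by simp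
    have fR: "finite R" unfolding R_def using fG by simp
    define F where "F = (\<lambda>Q. Z' \<union> Q) ` {Q. Q \<subseteq> R \<and> card Q = 2*s-1}"
    have cF: "card F = (5*s-2) choose (2*s-1)"
      unfolding F_def using fam1[of R Z' "2*s-1"] fR cR unfolding R_def by auto
    have "(5*s-2) choose 1 \<le> (5*s-2) choose (2*s-1)"
      by (rule binomial_mono) (use s in linarith)+
    then have "card F \<ge> 3" using cF s by simp
    moreover have finF: "finite F" unfolding F_def using fR by simp
    ultimately have c3: "card F \<ge> 3" "finite F" by auto
    have d1: "card F - card {A,C} \<le> card (F - {A,C})" by (rule diff_card_le_card_Diff) simp
    have d2: "card {A,C} \<le> 2" by (simp add: card_insert_if)
    have ne: "F - {A,C} \<noteq> {}"
    proof
      assume e: "F - {A,C} = {}"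
      have "card (F - {A,C}) = 0" unfolding e by simp
      then show False using d1 d2 c3 by linarith
    qed
    then obtain B where B: "B \<in> F" "B \<noteq> A" "B \<noteq> C" by blast
    then obtain Q where Q: "Q \<subseteq> R" "card Q = 2*s-1" "B = Z' \<union> Q" unfolding F_def by auto
    have fQ: "finite Q" using Q fR by (auto intro: finite_subset)
    have "Z' \<inter> Q = {}" using Q unfolding R_def by auto
    then have "card B = (s+1) + (2*s-1)" using card_Un_disjoint[OF fZ' fQ] Z' Q by simp
    moreover have "B \<subseteq> GS s" using Q Z'G unfolding R_def by auto
    moreover have "Z' \<subseteq> A \<inter> B" "Z' \<subseteq> B \<inter> C" using Z' Q unfolding Z_def by auto
    then have "card (A \<inter> B) \<ge> s+1" "card (B \<inter> C) \<ge> s+1"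
      using card_mono[of "A \<inter> B" Z'] card_mono[of "B \<inter> C" Z'] fA fC Z' by auto
    ultimately show ?thesis using B s unfolding VS_def
      by (intro bexI[of _ B]) auto
  next
    case False
    have hX: "s+1 \<le> card X" "s+1 \<le> card Y" using False cX s by auto
    obtain X' where X': "X' \<subseteq> X" "card X' = s+1" using obtain_subset_with_card_n[OF hX(1)] by blast
    obtain Y' where Y': "Y' \<subseteq> Y" "card Y' = s+1" using obtain_subset_with_card_n[OF hX(2)] by blast
    have fX': "finite X'" "finite Y'" using X' Y' fX by (auto intro: finite_subset)
    have XY: "X' \<inter> Y' = {}" using X' Y' unfolding X_def Y_def by auto
    have cXY: "card (X' \<union> Y') = 2*s+2" using card_Un_disjoint[OF fX' XY] X' Y' by simp
    have XYG: "X' \<union> Y' \<subseteq> GS s" using X' Y' sub unfolding X_def Y_def by auto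
    have cR: "card (GS s - (X' \<union> Y')) = 4*s - 3"
      using card_Diff_subset[OF finite_subset[OF XYG fG] XYG] cXY cG s by simp
    have hR: "s - 2 \<le> card (GS s - (X' \<union> Y'))" using cR s by simp
    obtain R where R: "R \<subseteq> GS s - (X' \<union> Y')" "card R = s - 2" using obtain_subset_with_card_n[OF hR] by blast
    have fR: "finite R" using R fG by (auto intro: finite_subset)
    define B where "B = X' \<union> Y' \<union> R"
    have "card B = (s+1) + (s+1) + (s-2)"
      unfolding B_def using card_Un3[OF fX' fR] XY R X' Y' by auto
    moreover have "B \<subseteq> GS s" unfolding B_def using R XYG by auto
    moreover have "X' \<subseteq> A \<inter> B" "Y' \<subseteq> B \<inter> C" unfolding B_def using X' Y' unfolding X_def Y_def by auto
    then have "card (A \<inter> B) \<ge> s+1" "card (B \<inter> C) \<ge> s+1"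
      using card_mono[of "A \<inter> B" X'] card_mono[of "B \<inter> C" Y'] fA fC X' Y' by auto
    moreover have "B \<noteq> A"
    proof
      assume "B = A"
      have "Y' \<noteq> {}" using Y' by auto
      then obtain y where "y \<in> Y'" by blast
      then show False using \<open>B = A\<close> Y' unfolding B_def Y_def by auto
    qed
    moreover have "B \<noteq> C"
    proof
      assume "B = C"
      have "X' \<noteq> {}" using X' by auto
      then obtain x where "x \<in> X'" by blast
      then show False using \<open>B = C\<close> X' unfolding B_def X_def by auto
    qed
    ultimately show ?thesis using s unfolding VS_def
      by (intro bexI[of _ B]) auto
  qed
qed

definition RelS :: "nat \<Rightarrow> (nat set set \<Rightarrow> nat) \<Rightarrow> atom \<Rightarrow> (nat set \<times> nat set) set" where
  "RelS s g a = (case a of One \<Rightarrow> Id_on (VS s)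
     | Red \<Rightarrow> {(A,C). A \<in> VS s \<and> C \<in> VS s \<and> A \<noteq> C \<and> card (A \<inter> C) > s}
     | Blue j \<Rightarrow> {(A,C). A \<in> VS s \<and> C \<in> VS s \<and> card (A \<inter> C) \<le> s \<and> g {A,C} = j})"

definition ES :: "nat \<Rightarrow> nat set set set" where
  "ES s = {{A,C} | A C. A \<in> VS s \<and> C \<in> VS s \<and> card (A \<inter> C) \<le> s}"

lemma RelS_One[simp]: "(A,C) \<in> RelS s g One \<longleftrightarrow> A \<in> VS s \<and> C = A"
  unfolding RelS_def by auto
lemma RelS_Red[simp]: "(A,C) \<in> RelS s g Red \<longleftrightarrow> A \<in> VS s \<and> C \<in> VS s \<and> A \<noteq> C \<and> card (A \<inter> C) > s"
  unfolding RelS_def by auto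
lemma RelS_Blue[simp]: "(A,C) \<in> RelS s g (Blue j) \<longleftrightarrow> A \<in> VS s \<and> C \<in> VS s \<and> card (A \<inter> C) \<le> s \<and> g {A,C} = j"
  unfolding RelS_def by auto

lemma VS_nonempty: "{..<3*s} \<in> VS s"
  unfolding VS_def GS_def by auto

lemma atoms_cases: "a \<in> atoms n \<Longrightarrow> a = One \<or> a = Red \<or> (\<exists>j\<in>{1..n}. a = Blue j)"
  unfolding atoms_def by auto

lemma RelS_sym: "(A,C) \<in> RelS s g a \<longleftrightarrow> (C,A) \<in> RelS s g a"
  by (cases a) (auto simp: Int_commute insert_commute)

lemma RelS_sub: "RelS s g a \<subseteq> VS s \<times> VS s"
  by (cases a) auto

lemma RelS_disj:
  assumes "(A,C) \<in> RelS s g a" "(A,C) \<in> RelS s g b" and s: "s \<ge> 1" shows "a = b"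
proof -
  have "A \<in> VS s" using assms RelS_sub by blast
  then have "card A = 3*s" unfolding VS_def by simp
  then have "\<not> card A \<le> s" using s by simp
  then show ?thesis using assms by (cases a; cases b) auto
qed

lemma rep_from_good:
  assumes s: "s \<ge> 2" and n: "n \<ge> 1"
    and col: "\<forall>e\<in>ES s. g e \<in> {1..n}"
    and G1: "\<forall>A\<in>VS s. \<forall>C\<in>VS s. A \<noteq> C \<and> card (A \<inter> C) > s \<longrightarrow>
        (\<forall>i\<in>{1..n}. \<forall>j\<in>{1..n}. \<exists>B\<in>VS s. card (A \<inter> B) \<le> s \<and> card (B \<inter> C) \<le> s \<and> g {A,B} = i \<and> g {B,C} = j)"
    and G2: "\<forall>A\<in>VS s. \<forall>C\<in>VS s. A \<noteq> C \<longrightarrow>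
        (\<forall>j\<in>{1..n}. \<exists>B\<in>VS s. B \<noteq> A \<and> card (A \<inter> B) > s \<and> card (B \<inter> C) \<le> s \<and> g {B,C} = j)"
  shows "is_rep n (VS s) (RelS s g)"
proof -
  let ?R = "RelS s g"
  let ?V = "VS s"
  have s1: "s \<ge> 1" using s by simp
  have redn: "\<exists>B\<in>?V. (A,B) \<in> ?R Red" if "A \<in> ?V" for A
    using det_red[OF that that s] that by auto
  have bluen: "\<exists>B\<in>?V. (A,B) \<in> ?R (Blue j)" if hA: "A \<in> ?V" and hj: "j \<in> {1..n}" for A j
  proof -
    obtain D where D: "D \<in> ?V" "D \<noteq> A" using redn[OF hA] by auto
    obtain B where B: "B \<in> ?V" "card (B \<inter> A) \<le> s" "g {B,A} = j" using G2 D hA hj by blast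
    then show ?thesis using hA by (auto simp: Int_commute insert_commute intro!: bexI[of _ B])
  qed
  have cover: "\<exists>z\<in>atoms n. (A,C) \<in> ?R z" if "A \<in> ?V" "C \<in> ?V" for A C
  proof (cases "A = C")
    case True then show ?thesis using that unfolding atoms_def by (auto intro!: bexI[of _ One])
  next
    case False
    show ?thesis
    proof (cases "card (A \<inter> C) > s")
      case True then show ?thesis using that False unfolding atoms_def by (auto intro!: bexI[of _ Red])
    next
      case F2: False
      have "{A,C} \<in> ES s" using that F2 unfolding ES_def by (auto simp: not_less)
      then have "g {A,C} \<in> {1..n}" using col by auto
      then show ?thesis using that F2 unfolding atoms_def by (auto intro!: bexI[of _ "Blue (g {A,C})"])
    qed
  qed
  have p1: "\<forall>a\<in>atoms n. ?R a \<noteq> {} \<and> ?R a \<subseteq> ?V \<times> ?V"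
  proof
    fix a assume a: "a \<in> atoms n"
    have A0: "{..<3*s} \<in> ?V" by (rule VS_nonempty)
    have "?R a \<noteq> {}"
      using atoms_cases[OF a]
    proof (elim disjE bexE)
      assume "a = One" then show ?thesis using A0 by (auto simp: RelS_def)
    next
      assume aR: "a = Red"
      obtain B where "(({..<3*s}::nat set), B) \<in> ?R Red" using redn[OF A0] by blast
      then show ?thesis using aR by blast
    next
      fix j assume hj: "j \<in> {1..n}" "a = Blue j"
      obtain B where "(({..<3*s}::nat set), B) \<in> ?R (Blue j)" using bluen[OF A0 hj(1)] by blast
      then show ?thesis using hj by blast
    qed
    then show "?R a \<noteq> {} \<and> ?R a \<subseteq> ?V \<times> ?V" using RelS_sub by auto
  qed
  have p2: "\<forall>a\<in>atoms n. \<forall>b\<in>atoms n. a \<noteq> b \<longrightarrow> ?R a \<inter> ?R b = {}"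
  proof (intro ballI impI)
    fix a b :: atom assume ab: "a \<noteq> b"
    show "?R a \<inter> ?R b = {}"
    proof (rule ccontr)
      assume "?R a \<inter> ?R b \<noteq> {}"
      then obtain A C where "(A,C) \<in> ?R a" "(A,C) \<in> ?R b" by auto
      then have "a = b" by (rule RelS_disj[OF _ _ s1])
      then show False using ab by simp
    qed
  qed
  have p3: "(\<Union>a\<in>atoms n. ?R a) = ?V \<times> ?V"
  proof
    show "(\<Union>a\<in>atoms n. ?R a) \<subseteq> ?V \<times> ?V" using RelS_sub by (intro UN_least) simp
    show "?V \<times> ?V \<subseteq> (\<Union>a\<in>atoms n. ?R a)"
    proof
      fix p assume "p \<in> ?V \<times> ?V"
      then obtain A C where p: "p = (A,C)" "A \<in> ?V" "C \<in> ?V" by auto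
      obtain z where "z \<in> atoms n" "(A,C) \<in> ?R z" using cover[OF p(2,3)] by blast
      then show "p \<in> (\<Union>a\<in>atoms n. ?R a)" using p(1) by blast
    qed
  qed
  have p4: "?R One = Id_on ?V" by (simp add: RelS_def)
  have p5: "\<forall>a\<in>atoms n. (?R a)\<inverse> = ?R a"
    using RelS_sym by auto
  have p6: "?R x O ?R y = (\<Union>z\<in>{z\<in>atoms n. le_comp x y z}. ?R z)"
    if x: "x \<in> atoms n" and y: "y \<in> atoms n" for x y
  proof
    show "?R x O ?R y \<subseteq> (\<Union>z\<in>{z\<in>atoms n. le_comp x y z}. ?R z)"
    proof
      fix p assume "p \<in> ?R x O ?R y"
      then obtain A B C where p: "p = (A,C)" and AB: "(A,B) \<in> ?R x" and BC: "(B,C) \<in> ?R y" by auto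
      have AV: "A \<in> ?V" "B \<in> ?V" "C \<in> ?V" using AB BC RelS_sub by auto
      obtain z where z: "z \<in> atoms n" "(A,C) \<in> ?R z" using cover AV by blast
      have "le_comp x y z"
      proof (cases "x = One")
        case True
        then have "B = A" using AB by simp
        then have "z = y" using RelS_disj[OF _ _ s1] z BC by auto
        then show ?thesis using True by (simp add: le_comp_def)
      next
        case xO: False
        show ?thesis
        proof (cases "y = One")
          case True
          then have "C = B" using BC by simp
          then have "z = x" using RelS_disj[OF _ _ s1] z AB by auto
          then show ?thesis using True xO by (simp add: le_comp_def)
        next
          case yO: False
          show ?thesis
          proof (cases "z = One")
            case True
            then have "C = A" using z by simp
            then have "(A,B) \<in> ?R y" using BC RelS_sym by auto
            then have "x = y" using RelS_disj[OF _ _ s1] AB by auto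
            then show ?thesis using True xO yO by (simp add: le_comp_def)
          next
            case zO: False
            have "x = Red \<or> y = Red \<or> z = Red"
            proof (rule ccontr)
              assume nr: "\<not> (x = Red \<or> y = Red \<or> z = Red)"
              have "\<exists>i. x = Blue i" using xO nr by (cases x) auto
              moreover have "\<exists>i. y = Blue i" using yO nr by (cases y) auto
              moreover have "\<exists>i. z = Blue i" using zO nr by (cases z) auto
              ultimately have "card (A \<inter> B) \<le> s" "card (B \<inter> C) \<le> s" "card (A \<inter> C) \<le> s"
                using AB BC z by auto
              then show False using triangle_free[OF AV(1) AV(2) AV(3) s1] by simp
            qed
            then show ?thesis using xO yO zO by (simp add: le_comp_def)
          qed
        qed
      qed
      then show "p \<in> (\<Union>z\<in>{z\<in>atoms n. le_comp x y z}. ?R z)" using z p by auto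
    qed
  next
    show "(\<Union>z\<in>{z\<in>atoms n. le_comp x y z}. ?R z) \<subseteq> ?R x O ?R y"
    proof
      fix p assume "p \<in> (\<Union>z\<in>{z\<in>atoms n. le_comp x y z}. ?R z)"
      then obtain z where z: "z \<in> atoms n" "le_comp x y z" and pz: "p \<in> ?R z"
        by auto
      obtain A C where p: "p = (A,C)" by (cases p)
      have AC: "(A,C) \<in> ?R z" using pz p by simp
      have AV: "A \<in> ?V" "C \<in> ?V" using AC RelS_sub by auto
      have "\<exists>B. (A,B) \<in> ?R x \<and> (B,C) \<in> ?R y"
      proof (cases "x = One")
        case True
        then have "z = y" using z by (simp add: le_comp_def)
        then show ?thesis using True AC AV by (intro exI[of _ A]) auto
      next
        case xO: False
        show ?thesis
        proof (cases "y = One")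
          case True
          then have "z = x" using z xO by (simp add: le_comp_def)
          then show ?thesis using True AC AV by (intro exI[of _ C]) auto
        next
          case yO: False
          show ?thesis
          proof (cases "z = One")
            case True
            then have xy: "x = y" and CA: "C = A" using z xO yO AC by (auto simp: le_comp_def)
            have "\<exists>B. (A,B) \<in> ?R x"
              using atoms_cases[OF x] xO
            proof (elim disjE bexE)
              assume "x = Red" then show ?thesis using redn[OF AV(1)] by auto
            next
              fix j assume "j \<in> {1..n}" "x = Blue j" then show ?thesis using bluen[OF AV(1)] by blast
            qed simp
            then obtain B where "(A,B) \<in> ?R x" by auto
            then show ?thesis using xy CA RelS_sym by blast
          next
            case zO: False
            have cA: "card A = 3*s" using AV unfolding VS_def by simp
            have AC': "A \<noteq> C" using AC zO cA s1 by (cases z) auto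
            have red3: "x = Red \<or> y = Red \<or> z = Red" using z xO yO zO by (simp add: le_comp_def)
            show ?thesis
              using atoms_cases[OF x] atoms_cases[OF y] xO yO
            proof (elim disjE bexE; (simp only: ; fail)?)
              assume xy: "x = Red" "y = Red"
              obtain B where B: "B \<in> ?V" "B \<noteq> A" "card (A \<inter> B) > s" "B \<noteq> C" "card (B \<inter> C) > s"
                using det_red[OF AV s] by blast
              have "(A,B) \<in> ?R x" "(B,C) \<in> ?R y" using B AV xy by auto
              then show ?thesis by blast
            next
              fix j assume j: "j \<in> {1..n}" and xy: "x = Red" "y = Blue j"
              obtain B where "B \<in> ?V" "B \<noteq> A" "card (A \<inter> B) > s" "card (B \<inter> C) \<le> s" "g {B,C} = j"
                using G2 AV AC' j by blast
              then show ?thesis using xy AV by auto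
            next
              fix j assume j: "j \<in> {1..n}" and xy: "x = Blue j" "y = Red"
              obtain B where "B \<in> ?V" "B \<noteq> C" "card (C \<inter> B) > s" "card (B \<inter> A) \<le> s" "g {B,A} = j"
                using G2 AV AC' j by metis
              then show ?thesis using xy AV by (auto simp: Int_commute insert_commute)
            next
              fix i j assume i: "i \<in> {1..n}" and j: "j \<in> {1..n}" and xy: "x = Blue i" "y = Blue j"
              then have "z = Red" using red3 by auto
              then have "card (A \<inter> C) > s" using AC by simp
              then obtain B where "B \<in> ?V" "card (A \<inter> B) \<le> s" "card (B \<inter> C) \<le> s" "g {A,B} = i" "g {B,C} = j"
                using G1 AV AC' i j by blast
              then show ?thesis using xy AV by auto
            qed
          qed
        qed
      qed
      then show "p \<in> ?R x O ?R y" using p by auto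
    qed
  qed
  have p6': "\<forall>x\<in>atoms n. \<forall>y\<in>atoms n. ?R x O ?R y = (\<Union>z\<in>{z\<in>atoms n. le_comp x y z}. ?R z)"
    by (intro ballI) (rule p6)
  show ?thesis unfolding is_rep_def
    by (intro conjI) (fact p1, fact p2, fact p3, fact p4, fact p5, fact p6')
qed

lemma finite_ES: "finite (ES s)"
proof -
  have "ES s \<subseteq> Pow (VS s)" unfolding ES_def by auto
  then show ?thesis using finite_VS[of s] by (meson finite_Pow_iff finite_subset)
qed

lemma ES_mem: "A \<in> VS s \<Longrightarrow> C \<in> VS s \<Longrightarrow> card (A \<inter> C) \<le> s \<Longrightarrow> {A,C} \<in> ES s"
  unfolding ES_def by blast

lemma bad1_bound:
  assumes s: "s \<ge> 1" and n: "n \<ge> 1" and A: "A \<in> VS s" and C: "C \<in> VS s"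
    and AC: "A \<noteq> C" "card (A \<inter> C) > s" and ij: "i \<in> {1..n}" "j \<in> {1..n}"
  shows "real (card {g \<in> PiE (ES s) (\<lambda>_. {1..n}). \<not>(\<exists>B\<in>VS s. card (A \<inter> B) \<le> s \<and> card (B \<inter> C) \<le> s \<and> g {A,B} = i \<and> g {B,C} = j)})
     \<le> real n ^ card (ES s) * (1 - 1 / real n ^ 2) ^ ((2*s-1) choose s)"
proof -
  define L where "L = (2*s-1) choose s"
  define W where "W = {B \<in> VS s. card (A \<inter> B) \<le> s \<and> card (B \<inter> C) \<le> s}"
  have "L \<le> card W" using W1_bound[OF A C s AC(2)] unfolding W_def L_def .
  then obtain W' where W': "W' \<subseteq> W" "card W' = L" "finite W'" using obtain_subset_with_card_n by metis
  define K where "K = {1..n}"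
  define S where "S = {g \<in> PiE (ES s) (\<lambda>_. K). \<forall>w\<in>W'. \<not>(g ((\<lambda>B. {A,B}) w) = i \<and> g ((\<lambda>B. {B,C}) w) = j)}"
  have cA: "card A = 3*s" using A unfolding VS_def by simp
  have sub: "{g \<in> PiE (ES s) (\<lambda>_. {1..n}). \<not>(\<exists>B\<in>VS s. card (A \<inter> B) \<le> s \<and> card (B \<inter> C) \<le> s \<and> g {A,B} = i \<and> g {B,C} = j)} \<subseteq> S"
    unfolding S_def K_def using W' unfolding W_def by auto
  have cnt: "card S * card K ^ (2 * card W') = (card K ^ 2 - 1) ^ card W' * card K ^ card (ES s)"
    unfolding S_def
  proof (rule pair_count)
    show "finite (ES s)" by (rule finite_ES)
    show "finite K" unfolding K_def by simp
    show "finite W'" by fact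
    show "\<forall>w\<in>W'. {A,w} \<in> ES s \<and> {w,C} \<in> ES s"
      using W' A C unfolding W_def by (auto intro: ES_mem)
    show "\<forall>w\<in>W'. \<forall>w'\<in>W'. {A,w} \<noteq> {w',C}"
    proof (intro ballI notI)
      fix w w' assume w: "w \<in> W'" "w' \<in> W'" and e: "{A,w} = {w',C}"
      then have "(A = w' \<and> w = C) \<or> (A = C \<and> w = w')" by (auto simp: doubleton_eq_iff)
      then have "A = w'" using AC by auto
      then have "card (A \<inter> w') = 3*s" using cA by simp
      moreover have "card (A \<inter> w') \<le> s" using w W' unfolding W_def by auto
      ultimately show False using s by simp
    qed
    show "inj_on (\<lambda>B. {A,B}) W'" by (auto simp: inj_on_def doubleton_eq_iff)
    show "inj_on (\<lambda>B. {B,C}) W'" by (auto simp: inj_on_def doubleton_eq_iff)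
    show "i \<in> K" "j \<in> K" using ij K_def by auto
  qed
  have cK: "card K = n" unfolding K_def by simp
  have fS: "finite S" unfolding S_def
    by (rule finite_subset[OF _ finite_PiE[OF finite_ES, where T = "\<lambda>_. K"]]) (auto simp: K_def)
  have "real (card S) * real n ^ (2 * L) = (real n ^ 2 - 1) ^ L * real n ^ card (ES s)"
  proof -
    have "real (card S * n ^ (2 * L)) = real ((n ^ 2 - 1) ^ L * n ^ card (ES s))"
      using cnt cK W' by simp
    moreover have "real (n ^ 2 - 1) = real n ^ 2 - 1" using n by (simp add: of_nat_diff)
    ultimately show ?thesis by (simp add: of_nat_diff)
  qed
  then have "real (card S) = real n ^ card (ES s) * ((real n ^ 2 - 1) ^ L / real n ^ (2 * L))"
    using n by (simp add: field_simps)
  also have "(real n ^ 2 - 1) ^ L / real n ^ (2 * L) = (1 - 1 / real n ^ 2) ^ L"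
    using n by (simp add: power_mult power_divide[symmetric] diff_divide_distrib)
  finally have "real (card S) = real n ^ card (ES s) * (1 - 1 / real n ^ 2) ^ L" .
  moreover have "card {g \<in> PiE (ES s) (\<lambda>_. {1..n}). \<not>(\<exists>B\<in>VS s. card (A \<inter> B) \<le> s \<and> card (B \<inter> C) \<le> s \<and> g {A,B} = i \<and> g {B,C} = j)} \<le> card S"
    using card_mono[OF fS sub] .
  ultimately show ?thesis unfolding L_def by linarith
qed

lemma bad2_bound:
  assumes s: "s \<ge> 1" and n: "n \<ge> 1" and A: "A \<in> VS s" and C: "C \<in> VS s"
    and AC: "A \<noteq> C" and j: "j \<in> {1..n}"
  shows "real (card {g \<in> PiE (ES s) (\<lambda>_. {1..n}). \<not>(\<exists>B\<in>VS s. B \<noteq> A \<and> card (A \<inter> B) > s \<and> card (B \<inter> C) \<le> s \<and> g {B,C} = j)})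
     \<le> real n ^ card (ES s) * (1 - 1 / real n) ^ ((2*s-1) choose s)"
proof -
  define L where "L = (2*s-1) choose s"
  define W where "W = {B \<in> VS s. B \<noteq> A \<and> card (A \<inter> B) > s \<and> card (B \<inter> C) \<le> s}"
  have "L \<le> card W" using W2_bound[OF A C s AC] unfolding W_def L_def .
  then obtain W' where W': "W' \<subseteq> W" "card W' = L" "finite W'" using obtain_subset_with_card_n by metis
  define K where "K = {1..n}"
  define S where "S = {g \<in> PiE (ES s) (\<lambda>_. K). \<forall>w\<in>W'. g ((\<lambda>B. {B,C}) w) \<noteq> j}"
  have sub: "{g \<in> PiE (ES s) (\<lambda>_. {1..n}). \<not>(\<exists>B\<in>VS s. B \<noteq> A \<and> card (A \<inter> B) > s \<and> card (B \<inter> C) \<le> s \<and> g {B,C} = j)} \<subseteq> S"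
    unfolding S_def K_def using W' unfolding W_def by auto
  have cnt: "card S * card K ^ (card W') = (card K - 1) ^ card W' * card K ^ card (ES s)"
    unfolding S_def
  proof (rule single_count)
    show "finite (ES s)" by (rule finite_ES)
    show "finite K" unfolding K_def by simp
    show "finite W'" by fact
    show "\<forall>w\<in>W'. {w,C} \<in> ES s"
      using W' A C unfolding W_def by (auto intro: ES_mem)
    show "inj_on (\<lambda>B. {B,C}) W'" by (auto simp: inj_on_def doubleton_eq_iff)
    show "j \<in> K" using j K_def by auto
  qed
  have cK: "card K = n" unfolding K_def by simp
  have fS: "finite S" unfolding S_def
    by (rule finite_subset[OF _ finite_PiE[OF finite_ES, where T = "\<lambda>_. K"]]) (auto simp: K_def)
  have "real (card S) * real n ^ L = (real n - 1) ^ L * real n ^ card (ES s)"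
  proof -
    have "real (card S * n ^ L) = real ((n - 1) ^ L * n ^ card (ES s))"
      using cnt cK W' by simp
    then show ?thesis using n by (simp add: of_nat_diff)
  qed
  then have "real (card S) = real n ^ card (ES s) * ((real n - 1) ^ L / real n ^ L)"
    using n by (simp add: field_simps)
  also have "(real n - 1) ^ L / real n ^ L = (1 - 1 / real n) ^ L"
    using n by (simp add: power_divide[symmetric] diff_divide_distrib)
  finally have "real (card S) = real n ^ card (ES s) * (1 - 1 / real n) ^ L" .
  moreover have "card {g \<in> PiE (ES s) (\<lambda>_. {1..n}). \<not>(\<exists>B\<in>VS s. B \<noteq> A \<and> card (A \<inter> B) > s \<and> card (B \<inter> C) \<le> s \<and> g {B,C} = j)} \<le> card S"
    using card_mono[OF fS sub] .
  ultimately show ?thesis unfolding L_def by linarith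
qed

lemma good_exists:
  assumes s: "s \<ge> 1" and n: "n \<ge> 1"
    and cond: "real (card (VS s)) ^ 2 * real n ^ 2 * (1 - 1 / real n ^ 2) ^ ((2*s-1) choose s)
             + real (card (VS s)) ^ 2 * real n * (1 - 1 / real n) ^ ((2*s-1) choose s) < 1"
  shows "\<exists>g. (\<forall>e\<in>ES s. g e \<in> {1..n}) \<and>
    (\<forall>A\<in>VS s. \<forall>C\<in>VS s. A \<noteq> C \<and> card (A \<inter> C) > s \<longrightarrow>
        (\<forall>i\<in>{1..n}. \<forall>j\<in>{1..n}. \<exists>B\<in>VS s. card (A \<inter> B) \<le> s \<and> card (B \<inter> C) \<le> s \<and> g {A,B} = i \<and> g {B,C} = j)) \<and>
    (\<forall>A\<in>VS s. \<forall>C\<in>VS s. A \<noteq> C \<longrightarrow>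
        (\<forall>j\<in>{1..n}. \<exists>B\<in>VS s. B \<noteq> A \<and> card (A \<inter> B) > s \<and> card (B \<inter> C) \<le> s \<and> g {B,C} = j))"
proof -
  define K where "K = {1..n}"
  define V where "V = VS s"
  define L where "L = (2*s-1) choose s"
  define \<Omega> where "\<Omega> = PiE (ES s) (\<lambda>_. K)"
  define Req1 where "Req1 = {(A,C,i,j). A \<in> V \<and> C \<in> V \<and> A \<noteq> C \<and> card (A \<inter> C) > s \<and> i \<in> K \<and> j \<in> K}"
  define Req2 where "Req2 = {(A,C,j). A \<in> V \<and> C \<in> V \<and> A \<noteq> C \<and> j \<in> K}"
  define Bad1 where "Bad1 = (\<lambda>(A,C,i,j). {g \<in> \<Omega>. \<not>(\<exists>B\<in>VS s. card (A \<inter> B) \<le> s \<and> card (B \<inter> C) \<le> s \<and> g {A,B} = i \<and> g {B,C} = j)})"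
  define Bad2 where "Bad2 = (\<lambda>(A,C,j). {g \<in> \<Omega>. \<not>(\<exists>B\<in>VS s. B \<noteq> A \<and> card (A \<inter> B) > s \<and> card (B \<inter> C) \<le> s \<and> g {B,C} = j)})"
  define X1 where "X1 = real n ^ card (ES s) * (1 - 1 / real n ^ 2) ^ L"
  define X2 where "X2 = real n ^ card (ES s) * (1 - 1 / real n) ^ L"
  have finV: "finite V" unfolding V_def by (rule finite_VS)
  have finK: "finite K" unfolding K_def by simp
  have cK: "card K = n" unfolding K_def by simp
  have R1sub: "Req1 \<subseteq> V \<times> V \<times> K \<times> K" unfolding Req1_def by auto
  have R2sub: "Req2 \<subseteq> V \<times> V \<times> K" unfolding Req2_def by auto
  have finR1: "finite Req1" using R1sub finV finK by (meson finite_SigmaI finite_subset)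
  have finR2: "finite Req2" using R2sub finV finK by (meson finite_SigmaI finite_subset)
  have cR1: "card Req1 \<le> card V * card V * n * n"
    using card_mono[OF _ R1sub] finV finK cK by (simp add: card_cartesian_product)
  have cR2: "card Req2 \<le> card V * card V * n"
    using card_mono[OF _ R2sub] finV finK cK by (simp add: card_cartesian_product)
  have b1: "real (card (Bad1 r)) \<le> X1" if "r \<in> Req1" for r
  proof -
    obtain A C i j where r: "r = (A,C,i,j)" by (cases r) auto
    have h: "A \<in> VS s" "C \<in> VS s" "A \<noteq> C" "card (A \<inter> C) > s" "i \<in> {1..n}" "j \<in> {1..n}"
      using that r unfolding Req1_def V_def K_def by auto
    show ?thesis using bad1_bound[OF s n h] unfolding r Bad1_def X1_def L_def \<Omega>_def K_def by simp
  qed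
  have b2: "real (card (Bad2 r)) \<le> X2" if "r \<in> Req2" for r
  proof -
    obtain A C j where r: "r = (A,C,j)" by (cases r) auto
    have h: "A \<in> VS s" "C \<in> VS s" "A \<noteq> C" "j \<in> {1..n}"
      using that r unfolding Req2_def V_def K_def by auto
    show ?thesis using bad2_bound[OF s n h] unfolding r Bad2_def X2_def L_def \<Omega>_def K_def by simp
  qed
  define Bad where "Bad = (\<Union>r\<in>Req1. Bad1 r) \<union> (\<Union>r\<in>Req2. Bad2 r)"
  have "card Bad \<le> card (\<Union>r\<in>Req1. Bad1 r) + card (\<Union>r\<in>Req2. Bad2 r)"
    unfolding Bad_def by (rule card_Un_le)
  also have "\<dots> \<le> (\<Sum>r\<in>Req1. card (Bad1 r)) + (\<Sum>r\<in>Req2. card (Bad2 r))"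
    by (intro add_mono card_UN_le finR1 finR2)
  finally have "real (card Bad) \<le> (\<Sum>r\<in>Req1. real (card (Bad1 r))) + (\<Sum>r\<in>Req2. real (card (Bad2 r)))"
  proof -
    assume h: "card Bad \<le> (\<Sum>r\<in>Req1. card (Bad1 r)) + (\<Sum>r\<in>Req2. card (Bad2 r))"
    have "real (card Bad) \<le> real ((\<Sum>r\<in>Req1. card (Bad1 r)) + (\<Sum>r\<in>Req2. card (Bad2 r)))"
      using h by (simp only: of_nat_le_iff)
    then show ?thesis by (simp add: of_nat_sum)
  qed
  also have "\<dots> \<le> real (card Req1) * X1 + real (card Req2) * X2"
    by (intro add_mono sum_bounded_above b1 b2) auto
  also have "\<dots> \<le> real (card V * card V * n * n) * X1 + real (card V * card V * n) * X2"
  proof -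
    have "X1 \<ge> 0" "X2 \<ge> 0" unfolding X1_def X2_def using n
      by (auto intro!: mult_nonneg_nonneg zero_le_power simp: field_simps)
    then show ?thesis using cR1 cR2
      by (intro add_mono mult_right_mono) (simp_all only: of_nat_le_iff)
  qed
  also have "\<dots> = real n ^ card (ES s) *
      (real (card V) ^ 2 * real n ^ 2 * (1 - 1 / real n ^ 2) ^ L + real (card V) ^ 2 * real n * (1 - 1 / real n) ^ L)"
    unfolding X1_def X2_def by (simp add: algebra_simps power2_eq_square)
  also have "\<dots> < real n ^ card (ES s)"
    using cond n unfolding V_def L_def by simp
  also have "\<dots> = real (card \<Omega>)"
    unfolding \<Omega>_def using finite_ES cK by (simp add: card_PiE)
  finally have "card Bad < card \<Omega>" by simp
  moreover have "Bad \<subseteq> \<Omega>"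
  proof -
    have "Bad1 r \<subseteq> \<Omega>" for r by (cases r) (auto simp: Bad1_def)
    moreover have "Bad2 r \<subseteq> \<Omega>" for r by (cases r) (auto simp: Bad2_def)
    ultimately show ?thesis unfolding Bad_def by blast
  qed
  moreover have "finite \<Omega>" unfolding \<Omega>_def using finite_ES finK by (intro finite_PiE) auto
  ultimately have "\<not> \<Omega> \<subseteq> Bad" using card_mono[of Bad \<Omega>] finite_subset by (metis not_le card_mono)
  then obtain g where g: "g \<in> \<Omega>" "g \<notin> Bad" by blast
  have P0: "\<forall>e\<in>ES s. g e \<in> {1..n}" using g(1) unfolding \<Omega>_def K_def by auto
  have P1: "\<forall>A\<in>VS s. \<forall>C\<in>VS s. A \<noteq> C \<and> card (A \<inter> C) > s \<longrightarrow>
        (\<forall>i\<in>{1..n}. \<forall>j\<in>{1..n}. \<exists>B\<in>VS s. card (A \<inter> B) \<le> s \<and> card (B \<inter> C) \<le> s \<and> g {A,B} = i \<and> g {B,C} = j)"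
  proof (intro ballI impI)
    fix A C i j assume h: "A \<in> VS s" "C \<in> VS s" "A \<noteq> C \<and> card (A \<inter> C) > s" "i \<in> {1..n}" "j \<in> {1..n}"
    then have "(A,C,i,j) \<in> Req1" unfolding Req1_def V_def K_def by auto
    then have "g \<notin> Bad1 (A,C,i,j)" using g(2) unfolding Bad_def by blast
    then show "\<exists>B\<in>VS s. card (A \<inter> B) \<le> s \<and> card (B \<inter> C) \<le> s \<and> g {A,B} = i \<and> g {B,C} = j"
      using g(1) unfolding Bad1_def by auto
  qed
  have P2: "\<forall>A\<in>VS s. \<forall>C\<in>VS s. A \<noteq> C \<longrightarrow>
        (\<forall>j\<in>{1..n}. \<exists>B\<in>VS s. B \<noteq> A \<and> card (A \<inter> B) > s \<and> card (B \<inter> C) \<le> s \<and> g {B,C} = j)"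
  proof (intro ballI impI)
    fix A C j assume h: "A \<in> VS s" "C \<in> VS s" "A \<noteq> C" "j \<in> {1..n}"
    then have "(A,C,j) \<in> Req2" unfolding Req2_def V_def K_def by auto
    then have "g \<notin> Bad2 (A,C,j)" using g(2) unfolding Bad_def by blast
    then show "\<exists>B\<in>VS s. B \<noteq> A \<and> card (A \<inter> B) > s \<and> card (B \<inter> C) \<le> s \<and> g {B,C} = j"
      using g(1) unfolding Bad2_def by auto
  qed
  show ?thesis using P0 P1 P2 by blast
qed

lemma is_rep_transport:
  assumes rep: "is_rep n U R" and inj: "inj_on h U"
  shows "is_rep n (h ` U) (\<lambda>a. map_prod h h ` R a)"
proof -
  note r = rep[unfolded is_rep_def]
  note r1 = conjunct1[OF r]
  note r2 = conjunct1[OF conjunct2[OF r]]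
  note r3 = conjunct1[OF conjunct2[OF conjunct2[OF r]]]
  note r4 = conjunct1[OF conjunct2[OF conjunct2[OF conjunct2[OF r]]]]
  note r5 = conjunct1[OF conjunct2[OF conjunct2[OF conjunct2[OF conjunct2[OF r]]]]]
  note r6 = conjunct2[OF conjunct2[OF conjunct2[OF conjunct2[OF conjunct2[OF r]]]]]
  have sub: "\<forall>a\<in>atoms n. R a \<subseteq> U \<times> U" using r1 by simp
  have injp: "inj_on (map_prod h h) (U \<times> U)" using inj by (auto simp: inj_on_def)
  have comp: "map_prod h h ` P O map_prod h h ` Q = map_prod h h ` (P O Q)"
    if "P \<subseteq> U \<times> U" "Q \<subseteq> U \<times> U" for P Q
  proof
    show "map_prod h h ` P O map_prod h h ` Q \<subseteq> map_prod h h ` (P O Q)"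
    proof
      fix p assume "p \<in> map_prod h h ` P O map_prod h h ` Q"
      then obtain a b1 b2 c where p: "p = (h a, h c)" and ab: "(a,b1) \<in> P" and bc: "(b2,c) \<in> Q" and
        e: "h b1 = h b2" by auto
      have "b1 \<in> U" "b2 \<in> U" using ab bc that by auto
      then have "b1 = b2" using e inj by (auto simp: inj_on_def)
      then show "p \<in> map_prod h h ` (P O Q)" using ab bc p by auto
    qed
    show "map_prod h h ` (P O Q) \<subseteq> map_prod h h ` P O map_prod h h ` Q" by auto
  qed
  have p1: "\<forall>a\<in>atoms n. map_prod h h ` R a \<noteq> {} \<and> map_prod h h ` R a \<subseteq> h ` U \<times> h ` U"
  proof
    fix a assume a: "a \<in> atoms n"
    have "R a \<noteq> {}" "R a \<subseteq> U \<times> U" using r1 a by auto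
    then show "map_prod h h ` R a \<noteq> {} \<and> map_prod h h ` R a \<subseteq> h ` U \<times> h ` U" by auto
  qed
  have p2: "\<forall>a\<in>atoms n. \<forall>b\<in>atoms n. a \<noteq> b \<longrightarrow> map_prod h h ` R a \<inter> map_prod h h ` R b = {}"
  proof (intro ballI impI)
    fix a b assume ab: "a \<in> atoms n" "b \<in> atoms n" "a \<noteq> b"
    have "map_prod h h ` R a \<inter> map_prod h h ` R b = map_prod h h ` (R a \<inter> R b)"
      using inj_on_image_Int[OF injp, of "R a" "R b"] sub ab by simp
    also have "R a \<inter> R b = {}" using r2 ab by simp
    finally show "map_prod h h ` R a \<inter> map_prod h h ` R b = {}" by simp
  qed
  have p3: "(\<Union>a\<in>atoms n. map_prod h h ` R a) = h ` U \<times> h ` U"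
  proof -
    have "(\<Union>a\<in>atoms n. map_prod h h ` R a) = map_prod h h ` (\<Union>a\<in>atoms n. R a)" by auto
    also have "(\<Union>a\<in>atoms n. R a) = U \<times> U" using r3 .
    finally show ?thesis by auto
  qed
  have p4: "map_prod h h ` R One = Id_on (h ` U)"
    using r4 by (auto simp: Id_on_def)
  have p5: "\<forall>a\<in>atoms n. (map_prod h h ` R a)\<inverse> = map_prod h h ` R a"
  proof
    fix a assume a: "a \<in> atoms n"
    have "(map_prod h h ` R a)\<inverse> = map_prod h h ` ((R a)\<inverse>)" by auto
    also have "(R a)\<inverse> = R a" using r5 a by simp
    finally show "(map_prod h h ` R a)\<inverse> = map_prod h h ` R a" .
  qed
  have p6: "\<forall>x\<in>atoms n. \<forall>y\<in>atoms n.
        map_prod h h ` R x O map_prod h h ` R y = (\<Union>z\<in>{z\<in>atoms n. le_comp x y z}. map_prod h h ` R z)"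
  proof (intro ballI)
    fix x y assume xy: "x \<in> atoms n" "y \<in> atoms n"
    have "map_prod h h ` R x O map_prod h h ` R y = map_prod h h ` (R x O R y)"
      using comp sub xy by simp
    also have "R x O R y = (\<Union>z\<in>{z\<in>atoms n. le_comp x y z}. R z)" using r6 xy by simp
    finally show "map_prod h h ` R x O map_prod h h ` R y = (\<Union>z\<in>{z\<in>atoms n. le_comp x y z}. map_prod h h ` R z)"
      by auto
  qed
  show ?thesis unfolding is_rep_def
    by (intro conjI) (fact p1, fact p2, fact p3, fact p4, fact p5, fact p6)
qed

lemma f_bound:
  assumes s: "s \<ge> 2" and n: "n \<ge> 1"
    and cond: "real (card (VS s)) ^ 2 * real n ^ 2 * (1 - 1 / real n ^ 2) ^ ((2*s-1) choose s)
             + real (card (VS s)) ^ 2 * real n * (1 - 1 / real n) ^ ((2*s-1) choose s) < 1"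
  shows "\<exists>k. f n = enat k \<and> k \<le> card (VS s)"
proof -
  obtain g where g: "\<forall>e\<in>ES s. g e \<in> {1..n}"
    "\<forall>A\<in>VS s. \<forall>C\<in>VS s. A \<noteq> C \<and> card (A \<inter> C) > s \<longrightarrow>
        (\<forall>i\<in>{1..n}. \<forall>j\<in>{1..n}. \<exists>B\<in>VS s. card (A \<inter> B) \<le> s \<and> card (B \<inter> C) \<le> s \<and> g {A,B} = i \<and> g {B,C} = j)"
    "\<forall>A\<in>VS s. \<forall>C\<in>VS s. A \<noteq> C \<longrightarrow>
        (\<forall>j\<in>{1..n}. \<exists>B\<in>VS s. B \<noteq> A \<and> card (A \<inter> B) > s \<and> card (B \<inter> C) \<le> s \<and> g {B,C} = j)"
    using good_exists[OF _ n cond] s by auto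
  have rep: "is_rep n (VS s) (RelS s g)" by (rule rep_from_good[OF s n g])
  have injV: "inj_on set_encode (VS s)"
    using inj_on_set_encode by (rule inj_on_subset) (auto dest: VS_finite)
  define U where "U = set_encode ` VS s"
  have repU: "is_rep n U (\<lambda>a. map_prod set_encode set_encode ` RelS s g a)"
    unfolding U_def by (rule is_rep_transport[OF rep injV])
  have finU: "finite U" unfolding U_def using finite_VS by simp
  have cU: "card U = card (VS s)" unfolding U_def using card_image[OF injV] .
  have "enat (card U) \<in> Spec n" unfolding Spec_def using repU finU by auto
  then have le: "f n \<le> enat (card U)" unfolding f_def by (rule Inf_lower)
  then obtain k where "f n = enat k" by (cases "f n") auto
  then show ?thesis using le cU by auto
qed

lemma L_lower:
  assumes s: "s \<ge> 1"
  shows "real ((2*s-1) choose s) \<ge> 4 ^ s / (4 * real s)"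
proof -
  have e1: "((2*s) choose s) = ((2*s-1) choose (s-1)) + ((2*s-1) choose s)"
  proof -
    have "2*s = Suc (2*s-1)" "s = Suc (s-1)" using s by auto
    then have "(2*s) choose s = Suc (2*s-1) choose Suc (s-1)" by simp
    also have "\<dots> = ((2*s-1) choose (s-1)) + ((2*s-1) choose Suc (s-1))" by (rule binomial_Suc_Suc)
    finally show ?thesis using \<open>s = Suc (s-1)\<close> by simp
  qed
  have e2: "(2*s-1) choose (s-1) = (2*s-1) choose s"
    using binomial_symmetric[of "s-1" "2*s-1"] s by (simp add: numeral_2_eq_2)
  have "4 ^ s / (2 * real s) \<le> real ((2*s) choose s)" using central_binomial_lower_bound[of s] s by simp
  also have "\<dots> = 2 * real ((2*s-1) choose s)" using e1 e2 by simp
  finally show ?thesis using s by (simp add: field_simps)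
qed

lemma numeric:
  fixes \<epsilon> x :: real and n :: nat
  assumes e: "\<epsilon> > 0" and x4: "x \<ge> 4" and n1: "n \<ge> 1" and nx: "real n = x"
    and P1: "8192 * x powr (14 + \<epsilon>) * exp (- (x powr (\<epsilon>/6)) / (4 * ((1 + \<epsilon>/12) * log 2 x + 1))) < 1"
    and P2: "16 \<le> x powr (\<epsilon>/2)"
  defines "s \<equiv> nat \<lceil>(1 + \<epsilon>/12) * log 2 x\<rceil>"
  shows "s \<ge> 2" "real ((6*s-1) choose (3*s)) \<le> 2 * x powr (6 + \<epsilon>)"
    "real ((6*s-1) choose (3*s)) ^ 2 * real n ^ 2 * (1 - 1 / real n ^ 2) ^ ((2*s-1) choose s)
             + real ((6*s-1) choose (3*s)) ^ 2 * real n * (1 - 1 / real n) ^ ((2*s-1) choose s) < 1"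
proof -
  define a where "a = 1 + \<epsilon>/12"
  have xpos: "x > 0" using x4 by simp
  have a1: "a \<ge> 1" using e a_def by simp
  have lg: "log 2 x \<ge> 2"
  proof -
    have "log 2 x \<ge> log 2 4" using x4 by (subst log_le_cancel_iff) auto
    moreover have "log 2 (4::real) = 2"
    proof -
      have "(4::real) = 2 ^ 2" by simp
      then show ?thesis by (simp only: log_pow_cancel)
    qed
    ultimately show ?thesis by simp
  qed
  have alg: "a * log 2 x \<ge> 2" using lg a1 mult_mono[of 1 a 2 "log 2 x"] by simp
  have sdef: "s = nat \<lceil>a * log 2 x\<rceil>" unfolding s_def a_def ..
  have c0: "\<lceil>a * log 2 x\<rceil> \<ge> 0" using alg by linarith
  have rs0: "real s = of_int \<lceil>a * log 2 x\<rceil>" unfolding sdef using c0 by simp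
  have rs: "real s \<ge> a * log 2 x" "real s \<le> a * log 2 x + 1"
    unfolding rs0 by (rule le_of_int_ceiling, rule of_int_ceiling_le_add_one)
  show s2: "s \<ge> 2" using rs(1) alg by linarith
  have s1: "s \<ge> 1" using s2 by simp
  have p2s: "(2::real) ^ s = 2 powr real s" by (simp add: powr_realpow)
  have xa: "2 powr (a * log 2 x) = x powr a"
  proof -
    have "2 powr (a * log 2 x) = (2 powr (log 2 x)) powr a" by (simp add: powr_powr mult.commute)
    also have "2 powr (log 2 x) = x" using xpos by simp
    finally show ?thesis .
  qed
  have low: "(2::real) ^ s \<ge> x powr a"
  proof -
    have "2 powr (a * log 2 x) \<le> 2 powr real s" using rs(1) by (intro powr_mono) auto
    then show ?thesis using xa p2s by simp
  qed
  have up: "(2::real) ^ s \<le> 2 * x powr a"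
  proof -
    have "2 powr real s \<le> 2 powr (a * log 2 x + 1)" using rs(2) by (intro powr_mono) auto
    also have "\<dots> = 2 * x powr a" using xa by (simp add: powr_add)
    finally show ?thesis using p2s by simp
  qed
  define N where "N = real ((6*s-1) choose (3*s))"
  define L where "L = (2*s-1) choose s"
  have NN: "N \<le> ((2::real) ^ s) ^ 6 / 2"
  proof -
    have "(6*s-1) choose (3*s) \<le> 2 ^ (6*s-1)" by (rule binomial_le_pow2)
    then have "N \<le> 2 ^ (6*s-1)" unfolding N_def by (metis of_nat_le_iff of_nat_numeral of_nat_power)
    also have "(2::real) ^ (6*s-1) = 2 ^ (6*s) / 2"
    proof -
      have "6*s = Suc (6*s-1)" using s1 by simp
      then have "(2::real) ^ (6*s) = 2 * 2 ^ (6*s-1)" by (metis power_Suc)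
      then show ?thesis by simp
    qed
    also have "(2::real) ^ (6*s) = (2 ^ s) ^ 6" by (simp add: power_mult mult.commute)
    finally show ?thesis .
  qed
  have N0: "N \<ge> 0" unfolding N_def by simp
  have pa0: "x powr a \<ge> 0" by simp
  have up6: "((2::real) ^ s) ^ 6 \<le> 64 * x powr (6 * a)"
  proof -
    have "((2::real) ^ s) ^ 6 \<le> (2 * x powr a) ^ 6" using up by (intro power_mono) auto
    also have "(2 * x powr a) ^ 6 = 64 * x powr (6 * a)"
    proof -
      have "(x powr a) ^ 6 = x powr (6 * a)" using powr_power[of x a 6] xpos by simp
      then show ?thesis by (simp add: power_mult_distrib)
    qed
    finally show ?thesis .
  qed
  show "real ((6*s-1) choose (3*s)) \<le> 2 * x powr (6 + \<epsilon>)"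
  proof -
    have "N \<le> 32 * x powr (6*a)" using NN up6 by simp
    also have "x powr (6*a) = x powr 6 * x powr (\<epsilon>/2)"
    proof -
      have "6*a = 6 + \<epsilon>/2" unfolding a_def by simp
      then show ?thesis by (simp add: powr_add)
    qed
    also have "32 * (x powr 6 * x powr (\<epsilon>/2)) \<le> 2 * x powr (6 + \<epsilon>)"
    proof -
      have "x powr (6 + \<epsilon>) = x powr 6 * x powr (\<epsilon>/2) * x powr (\<epsilon>/2)" by (simp add: powr_add[symmetric] add.commute)
      moreover have "x powr 6 * x powr (\<epsilon>/2) \<ge> 0" by simp
      ultimately show ?thesis using P2 mult_left_mono[OF P2, of "2 * (x powr 6 * x powr (\<epsilon>/2))"] by (simp add: algebra_simps)
    qed
    finally show ?thesis unfolding N_def .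
  qed
  define X where "X = (1 - 1 / x ^ 2) ^ L"
  have xn: "real n = x" by (rule nx)
  have xx: "1 \<le> x * x" using mult_mono[of 1 x 1 x] x4 by simp
  have X0: "X \<ge> 0" unfolding X_def using x4 xx by (intro zero_le_power) (simp add: field_simps power2_eq_square)
  have Y: "(1 - 1 / x) ^ L \<le> X"
    unfolding X_def using x4 xx by (intro power_mono) (auto simp: field_simps power2_eq_square)
  have N2: "N ^ 2 \<le> 4096 * x powr (12 * a)"
  proof -
    have "N \<le> 32 * x powr (6*a)" using NN up6 by simp
    then have "N ^ 2 \<le> (32 * x powr (6*a)) ^ 2" using N0 by (intro power_mono) auto
    also have "(32 * x powr (6*a)) ^ 2 = 1024 * x powr (12 * a)"
    proof -
      have "(x powr (6*a)) ^ 2 = x powr (2 * (6 * a))" using powr_power[of x "6*a" 2] xpos by simp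
      then show ?thesis by (simp add: power_mult_distrib)
    qed
    finally show ?thesis using powr_ge_zero[of x "12*a"] by linarith
  qed
  have LL: "real L / x ^ 2 \<ge> x powr (\<epsilon>/6) / (4 * (a * log 2 x + 1))"
  proof -
    have LL1: "real L \<ge> 4 ^ s / (4 * real s)" unfolding L_def by (rule L_lower[OF s1])
    have "(2::real) ^ s * 2 ^ s = (2 * 2) ^ s" by (rule power_mult_distrib[symmetric])
    then have f4: "(4::real) ^ s = (2 ^ s) ^ 2" by (simp add: power2_eq_square)
    have "(2 ^ s) ^ 2 \<ge> (x powr a) ^ 2" using low by (intro power_mono) auto
    moreover have "(x powr a) ^ 2 = x powr (2 * a)" using powr_power[of x a 2] xpos by simp
    ultimately have f5: "(4::real) ^ s \<ge> x powr (2*a)" using f4 by simp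
    have "x powr (2*a) / (4 * real s) \<le> 4 ^ s / (4 * real s)"
      using f5 by (intro divide_right_mono) auto
    then have "real L \<ge> x powr (2*a) / (4 * real s)" using LL1 by linarith
    moreover have "x powr (2*a) / (4 * real s) \<ge> x powr (2*a) / (4 * (a * log 2 x + 1))"
      using rs s1 by (intro divide_left_mono) auto
    ultimately have "real L \<ge> x powr (2*a) / (4 * (a * log 2 x + 1))" by linarith
    then have "real L / x ^ 2 \<ge> x powr (2*a) / (4 * (a * log 2 x + 1)) / x ^ 2"
      using xpos by (intro divide_right_mono) auto
    also have "x powr (2*a) / (4 * (a * log 2 x + 1)) / x ^ 2 = x powr (\<epsilon>/6) / (4 * (a * log 2 x + 1))"
    proof -
      have "2*a = \<epsilon>/6 + 2" unfolding a_def by simp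
      then have "x powr (2*a) = x powr (\<epsilon>/6) * x powr 2" by (simp add: powr_add)
      then have "x powr (2*a) = x powr (\<epsilon>/6) * x ^ 2" using xpos by simp
      then show ?thesis using xpos by simp
    qed
    finally show ?thesis .
  qed
  have Xexp: "X \<le> exp (- (x powr (\<epsilon>/6)) / (4 * (a * log 2 x + 1)))"
  proof -
    have "1 - 1 / x ^ 2 \<le> exp (- (1 / x ^ 2))" using exp_ge_add_one_self[of "- (1 / x ^ 2)"] by simp
    then have "X \<le> exp (- (1 / x ^ 2)) ^ L"
      unfolding X_def using x4 xx by (intro power_mono) (auto simp: field_simps power2_eq_square)
    also have "\<dots> = exp (- (real L / x ^ 2))" by (simp add: exp_of_nat_mult[symmetric])
    also have "\<dots> \<le> exp (- (x powr (\<epsilon>/6)) / (4 * (a * log 2 x + 1)))" using LL by simp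
    finally show ?thesis .
  qed
  have "N ^ 2 * x ^ 2 * X + N ^ 2 * x * (1 - 1 / x) ^ L \<le> N ^ 2 * x ^ 2 * X + N ^ 2 * x ^ 2 * X"
  proof -
    have "x \<le> x ^ 2" using x4 by (simp add: power2_eq_square)
    then have "N ^ 2 * x * (1 - 1 / x) ^ L \<le> N ^ 2 * x ^ 2 * X"
      using Y X0 x4 by (intro mult_mono) (auto intro: mult_left_mono)
    then show ?thesis by linarith
  qed
  also have "\<dots> = 2 * N ^ 2 * x ^ 2 * X" by simp
  also have "\<dots> \<le> 2 * (4096 * x powr (12 * a)) * x ^ 2 * exp (- (x powr (\<epsilon>/6)) / (4 * (a * log 2 x + 1)))"
    using N2 Xexp X0 by (intro mult_mono) auto
  also have "\<dots> = 8192 * x powr (14 + \<epsilon>) * exp (- (x powr (\<epsilon>/6)) / (4 * ((1 + \<epsilon>/12) * log 2 x + 1)))"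
  proof -
    have e14: "14 + \<epsilon> = 12 * a + 2" unfolding a_def by simp
    have "x powr (14 + \<epsilon>) = x powr (12 * a + 2)" by (simp only: e14)
    also have "\<dots> = x powr (12 * a) * x powr 2" by (rule powr_add)
    finally have "x powr (14 + \<epsilon>) = x powr (12 * a) * x powr 2" .
    then have "x powr (12 * a) * x ^ 2 = x powr (14 + \<epsilon>)" using xpos by simp
    then show ?thesis unfolding a_def by (simp add: algebra_simps)
  qed
  also have "\<dots> < 1" by (rule P1)
  finally show "real ((6*s-1) choose (3*s)) ^ 2 * real n ^ 2 * (1 - 1 / real n ^ 2) ^ ((2*s-1) choose s)
             + real ((6*s-1) choose (3*s)) ^ 2 * real n * (1 - 1 / real n) ^ ((2*s-1) choose s) < 1"
    unfolding N_def X_def L_def xn .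
qed

theorem mainTheorem3:
  shows "\<forall>\<epsilon>::real. \<epsilon> > 0 \<longrightarrow> (\<exists>n0::nat. \<forall>n\<ge>n0.
           \<exists>k::nat. f n = enat k \<and> real k \<le> 2 * real n powr (6 + \<epsilon>))"
proof (intro allI impI)
  fix \<epsilon> :: real assume e: "\<epsilon> > 0"
  have ev1: "eventually (\<lambda>x::real. 8192 * x powr (14 + \<epsilon>) * exp (- (x powr (\<epsilon>/6)) / (4 * ((1 + \<epsilon>/12) * log 2 x + 1))) < 1) at_top"
    using e by real_asymp
  have ev2: "eventually (\<lambda>x::real. 16 \<le> x powr (\<epsilon>/2)) at_top"
    using e by real_asymp
  have ev3: "eventually (\<lambda>x::real. 4 \<le> x) at_top" by (rule eventually_ge_at_top)
  have ev: "eventually (\<lambda>x::real. 4 \<le> x \<and> 16 \<le> x powr (\<epsilon>/2) \<and>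
      8192 * x powr (14 + \<epsilon>) * exp (- (x powr (\<epsilon>/6)) / (4 * ((1 + \<epsilon>/12) * log 2 x + 1))) < 1) at_top"
    using ev1 ev2 ev3 by eventually_elim auto
  have evn: "eventually (\<lambda>n::nat. 4 \<le> real n \<and> 16 \<le> real n powr (\<epsilon>/2) \<and>
      8192 * real n powr (14 + \<epsilon>) * exp (- (real n powr (\<epsilon>/6)) / (4 * ((1 + \<epsilon>/12) * log 2 (real n) + 1))) < 1) sequentially"
    by (rule eventually_compose_filterlim[OF ev filterlim_real_sequentially])
  then obtain n0 where n0: "\<And>n. n \<ge> n0 \<Longrightarrow> 4 \<le> real n \<and> 16 \<le> real n powr (\<epsilon>/2) \<and>
      8192 * real n powr (14 + \<epsilon>) * exp (- (real n powr (\<epsilon>/6)) / (4 * ((1 + \<epsilon>/12) * log 2 (real n) + 1))) < 1"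
    unfolding eventually_sequentially by blast
  show "\<exists>n0::nat. \<forall>n\<ge>n0. \<exists>k::nat. f n = enat k \<and> real k \<le> 2 * real n powr (6 + \<epsilon>)"
  proof (rule exI[of _ n0], intro allI impI)
    fix n :: nat assume "n \<ge> n0"
    then have h: "4 \<le> real n" "16 \<le> real n powr (\<epsilon>/2)"
      "8192 * real n powr (14 + \<epsilon>) * exp (- (real n powr (\<epsilon>/6)) / (4 * ((1 + \<epsilon>/12) * log 2 (real n) + 1))) < 1"
      using n0 by auto
    have n1: "n \<ge> 1" using h(1) by simp
    define s where "s = nat \<lceil>(1 + \<epsilon>/12) * log 2 (real n)\<rceil>"
    have num: "s \<ge> 2" "real ((6*s-1) choose (3*s)) \<le> 2 * real n powr (6 + \<epsilon>)"
      "real ((6*s-1) choose (3*s)) ^ 2 * real n ^ 2 * (1 - 1 / real n ^ 2) ^ ((2*s-1) choose s)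
             + real ((6*s-1) choose (3*s)) ^ 2 * real n * (1 - 1 / real n) ^ ((2*s-1) choose s) < 1"
      using numeric[OF e h(1) n1 refl h(3) h(2)] unfolding s_def by auto
    obtain k where k: "f n = enat k" "k \<le> card (VS s)"
      using f_bound[OF num(1) n1] num(3) unfolding card_VS by auto
    have "real k \<le> real ((6*s-1) choose (3*s))" using k(2) unfolding card_VS by simp
    then show "\<exists>k::nat. f n = enat k \<and> real k \<le> 2 * real n powr (6 + \<epsilon>)"
      using k(1) num(2) by auto
  qed
qed

end
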